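(* Let $\alpha\in(0,1)$ and let $\{x_i\}_{i=1}^{\infty}$ be any countable subset of $SU(2)$. Then there exists a real-valued function $f\in\mathrm{Lip}_{\alpha}(SU(2))$ such that \[ \sup_{N\geq 1}|S_N f(x_i)|=\infty \quad\text{for all } i=1,2,3,\ldots. \]
   Context: $SU(2)$ is the group of $2\times 2$ complex unitary matrices of determinant $1$, equipped with the metric $d(x,y)=\sqrt{\tfrac12\mathrm{tr}((x-y)(x-y)^* )}$. For $0<\alpha<1$, $\mathrm{Lip}_{\alpha}(SU(2))$ is the set of real functions $f$ on $SU(2)$ for which there is $M\ge 0$ with $|f(x)-f(y)|\le M d(x,y)^{\alpha}$ for all $x,y\in SU(2)$. Let $\mu$ be normalized Haar measure on $SU(2)$. For each $x\in SU(2)$ with eigenvalues $e^{\pm i\theta}$, $\theta\in[0,\pi]$, the character of the $(n+1)$-dimensional irreducible unitary representation is $\chi_n(x)=\frac{\sin((n+1)\theta)}{\sin\theta}$ (interpreted by continuity at $\theta=0,\pi$). The Dirichlet kernel is $\mathbf{D}_N(x)=\sum_{n=0}^N (n+1)\chi_n(x)$, and for $f\in L^1(SU(2))$ the $N$th Fourier partial sum is $S_Nf(x)=(f*\mathbf{D}_N)(x)=\int_{SU(2)} f(xy^{-1})\mathbf{D}_N(y)\,d\mu(y)$. *)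

theory Defs
  imports "HOL-Analysis.Analysis"
begin

type_synonym cmat2 = "complex ^ 2 ^ 2"

definition conj_transpose :: "cmat2 \<Rightarrow> cmat2" where
  "conj_transpose A = (\<chi> i j. cnj (A $ j $ i))"

definition SU2 :: "cmat2 set" where
  "SU2 = {U. U ** conj_transpose U = mat 1 \<and> det U = 1}"

text \<open>d(x,y) = sqrt(1/2 tr((x-y)(x-y)^*)); the trace is real and nonnegative, we take its real part.\<close>
definition su2_dist :: "cmat2 \<Rightarrow> cmat2 \<Rightarrow> real" where
  "su2_dist x y = sqrt ((1/2) * Re (trace ((x - y) ** conj_transpose (x - y))))"

definition Lip_alpha :: "real \<Rightarrow> (cmat2 \<Rightarrow> real) \<Rightarrow> bool" where
  "Lip_alpha \<alpha> f \<longleftrightarrow> (\<exists>M\<ge>0. \<forall>x\<in>SU2. \<forall>y\<in>SU2. \<bar>f x - f y\<bar> \<le> M * su2_dist x y powr \<alpha>)"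

definition is_haar_SU2 :: "cmat2 measure \<Rightarrow> bool" where
  "is_haar_SU2 \<mu> \<longleftrightarrow> sets \<mu> = sets (restrict_space borel SU2) \<and> space \<mu> = SU2 \<and>
     emeasure \<mu> (space \<mu>) = 1 \<and>
     (\<forall>x\<in>SU2. \<forall>A\<in>sets \<mu>. emeasure \<mu> ((\<lambda>y. x ** y) ` A) = emeasure \<mu> A)"

text \<open>The angle theta in [0,pi] with eigenvalues exp(+-i theta); since the eigenvalues are
  exp(i theta), exp(-i theta), the trace is 2 cos theta.\<close>
definition su2_angle :: "cmat2 \<Rightarrow> real" where
  "su2_angle x = arccos (Re (trace x) / 2)"

definition su2_char :: "nat \<Rightarrow> cmat2 \<Rightarrow> real" where
  "su2_char n x = (let \<theta> = su2_angle x in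
     if \<theta> = 0 then real (n + 1)
     else if \<theta> = pi then (-1) ^ n * real (n + 1)
     else sin (real (n + 1) * \<theta>) / sin \<theta>)"

definition dirichlet_kernel :: "nat \<Rightarrow> cmat2 \<Rightarrow> real" where
  "dirichlet_kernel N x = (\<Sum>n\<le>N. real (n + 1) * su2_char n x)"

definition fourier_partial_sum :: "cmat2 measure \<Rightarrow> nat \<Rightarrow> (cmat2 \<Rightarrow> real) \<Rightarrow> cmat2 \<Rightarrow> real" where
  "fourier_partial_sum \<mu> N f x = (\<integral>y. f (x ** matrix_inv y) * dirichlet_kernel N y \<partial>\<mu>)"

end

theory Submission
  imports Defs "HOL-Computational_Algebra.Polynomial"
begin

definition mk :: "complex \<Rightarrow> complex \<Rightarrow> cmat2" where
  "mk a b = (\<chi> i j. if i = 1 then (if j = 1 then a else b) else (if j = 1 then - cnj b else cnj a))"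

lemma mk_nth[simp]: "mk a b $ 1 $ 1 = a" "mk a b $ 1 $ 2 = b" "mk a b $ 2 $ 1 = - cnj b" "mk a b $ 2 $ 2 = cnj a"
  by (simp_all add: mk_def)

lemma cmat2_eq_iff: "(A::cmat2) = B \<longleftrightarrow> A$1$1 = B$1$1 \<and> A$1$2 = B$1$2 \<and> A$2$1 = B$2$1 \<and> A$2$2 = B$2$2"
  by (auto simp: vec_eq_iff forall_2)

lemma mult_nth: "((A::cmat2) ** B) $ i $ j = A$i$1 * B$1$j + A$i$2 * B$2$j"
  by (simp add: matrix_matrix_mult_def sum_2)

lemma ct_nth[simp]: "conj_transpose A $ i $ j = cnj (A $ j $ i)"
  by (simp add: conj_transpose_def)

lemma mk_mult: "mk a b ** mk c d = mk (a*c - b * cnj d) (a*d + b * cnj c)"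
  by (simp add: cmat2_eq_iff mult_nth algebra_simps)

lemma ct_mk: "conj_transpose (mk a b) = mk (cnj a) (- b)"
  by (simp add: cmat2_eq_iff)

lemma mat1_mk: "(mat 1 :: cmat2) = mk 1 0"
  by (simp add: cmat2_eq_iff mat_def)

lemma det_mk: "det (mk a b) = a * cnj a + b * cnj b"
  by (simp add: det_2 algebra_simps)

lemma cnj_mult_self: "z * cnj z = complex_of_real ((cmod z)^2)"
  by (metis complex_norm_square of_real_power)

lemma SU2_mk_iff: "mk a b \<in> SU2 \<longleftrightarrow> (cmod a)^2 + (cmod b)^2 = 1"
proof -
  have "mk a b ** conj_transpose (mk a b) = mk (a * cnj a + b * cnj b) 0"
    by (simp add: ct_mk mk_mult algebra_simps)
  then have "mk a b \<in> SU2 \<longleftrightarrow> a * cnj a + b * cnj b = 1"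
    by (auto simp: SU2_def mat1_mk det_mk cmat2_eq_iff mult.commute)
  also have "\<dots> \<longleftrightarrow> (cmod a)^2 + (cmod b)^2 = 1"
    unfolding cnj_mult_self by (metis of_real_1 of_real_add of_real_eq_iff)
  finally show ?thesis .
qed

lemma SU2_D:
  assumes "y \<in> SU2"
  shows "y = mk (y$1$1) (y$1$2)" "(cmod (y$1$1))^2 + (cmod (y$1$2))^2 = 1"
proof -
  define a b c d where "a = y$1$1" "b = y$1$2" "c = y$2$1" "d = y$2$2"
  have e: "(y ** conj_transpose y) $ 1 $ 1 = 1" "(y ** conj_transpose y) $ 1 $ 2 = 0"
    "det y = 1"
    using assms by (auto simp: SU2_def mat_def)
  then have e1: "a * cnj a + b * cnj b = 1" and e2: "a * cnj c + b * cnj d = 0"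
    and e3: "a * d - b * c = 1"
    by (simp_all add: mult_nth det_2 a_b_c_d_def)
  have e2': "cnj a * c + cnj b * d = 0" using arg_cong[OF e2, of cnj] by simp
  then have ac: "cnj a * c = - (cnj b * d)" by (simp add: eq_neg_iff_add_eq_0)
  have "cnj a = cnj a * (a * d - b * c)" using e3 by simp
  also have "\<dots> = (a * cnj a) * d - b * (cnj a * c)" by (simp add: algebra_simps)
  also have "\<dots> = (a * cnj a) * d + b * (cnj b * d)" using ac by simp
  also have "\<dots> = (a * cnj a + b * cnj b) * d" by (simp add: algebra_simps)
  finally have dd: "d = cnj a" using e1 by simp
  have "- cnj b = - cnj b * (a * d - b * c)" using e3 by simp
  also have "\<dots> = - a * (cnj b * d) + (b * cnj b) * c" by (simp add: algebra_simps)
  also have "\<dots> = a * (cnj a * c) + (b * cnj b) * c" using ac by simp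
  also have "\<dots> = (a * cnj a + b * cnj b) * c" by (simp add: algebra_simps)
  finally have cc: "c = - cnj b" using e1 by simp
  show "y = mk (y$1$1) (y$1$2)" using dd cc by (simp add: cmat2_eq_iff a_b_c_d_def)
  show "(cmod (y$1$1))^2 + (cmod (y$1$2))^2 = 1"
    using e1 unfolding cnj_mult_self a_b_c_d_def by (metis of_real_1 of_real_add of_real_eq_iff)
qed

lemma SU2_cases:
  assumes "y \<in> SU2"
  obtains a b where "y = mk a b" "(cmod a)^2 + (cmod b)^2 = 1"
  using SU2_D[OF assms] by blast

lemma SU2_mk_iff_det: "mk a b \<in> SU2 \<longleftrightarrow> det (mk a b) = 1"
  unfolding SU2_mk_iff det_mk cnj_mult_self by (metis of_real_1 of_real_add of_real_eq_iff)

lemma SU2_mult: assumes "x \<in> SU2" "y \<in> SU2" shows "x ** y \<in> SU2"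
proof -
  have x: "x = mk (x$1$1) (x$1$2)" "det x = 1" using assms(1) SU2_D(1)[OF assms(1)] by (auto simp: SU2_def)
  have y: "y = mk (y$1$1) (y$1$2)" "det y = 1" using assms(2) SU2_D(1)[OF assms(2)] by (auto simp: SU2_def)
  show ?thesis using x y by (metis SU2_mk_iff_det det_mul mk_mult mult_1)
qed
  
lemma SU2_mkI: "(cmod a)^2 + (cmod b)^2 = 1 \<Longrightarrow> mk a b \<in> SU2"
  by (simp add: SU2_mk_iff)

lemma ct_SU2: "y \<in> SU2 \<Longrightarrow> conj_transpose y \<in> SU2"
  by (erule SU2_cases) (simp add: ct_mk SU2_mk_iff)

lemma ct_mult_SU2:
  assumes "y \<in> SU2"
  shows "conj_transpose y ** y = mat 1" "y ** conj_transpose y = mat 1"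
proof -
  obtain a b where y: "y = mk a b" "(cmod a)^2 + (cmod b)^2 = 1" using SU2_cases[OF assms] by blast
  have e: "a * cnj a + b * cnj b = 1" using y(2) unfolding cnj_mult_self
    by (metis of_real_1 of_real_add)
  show "conj_transpose y ** y = mat 1" "y ** conj_transpose y = mat 1"
    using e by (simp_all add: y ct_mk mk_mult mat1_mk algebra_simps)
qed

lemma matrix_inv_SU2:
  assumes "y \<in> SU2"
  shows "matrix_inv y = conj_transpose y"
  unfolding matrix_inv_def
proof (rule someI2[where a="conj_transpose y"])
  show "y ** conj_transpose y = mat 1 \<and> conj_transpose y ** y = mat 1"
    using ct_mult_SU2[OF assms] by simp
next
  fix A assume "y ** A = mat 1 \<and> A ** y = mat 1"
  then have "y ** A = mat 1" by simp
  then have "conj_transpose y ** (y ** A) = conj_transpose y" by (simp add: matrix_mul_rid)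
  then show "A = conj_transpose y"
    by (simp add: matrix_mul_assoc ct_mult_SU2[OF assms] matrix_mul_lid)
qed

definition X1 :: "cmat2 \<Rightarrow> real" where "X1 y = Re (y $ 1 $ 1)"

lemma trace_2: "trace (A::cmat2) = A$1$1 + A$2$2"
  by (simp add: trace_def sum_2)

lemma trace_SU2: "y \<in> SU2 \<Longrightarrow> Re (trace y) / 2 = X1 y"
  by (erule SU2_cases) (simp add: trace_2 X1_def)

lemma cmod_le_1: "(cmod a)^2 + (cmod b)^2 = 1 \<Longrightarrow> cmod a \<le> 1"
proof -
  assume h: "(cmod a)^2 + (cmod b)^2 = 1"
  have "(cmod a)^2 \<le> 1" using h zero_le_power2[of "cmod b"] by linarith
  then have "(cmod a)^2 \<le> 1^2" by simp
  then show ?thesis by (rule power2_le_imp_le) simp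
qed

lemma X1_bound: "y \<in> SU2 \<Longrightarrow> \<bar>X1 y\<bar> \<le> 1"
  using SU2_D(2) X1_def abs_Re_le_cmod cmod_le_1 order.trans by metis

lemma mk_diff: "mk p q - mk r s = mk (p - r) (q - s)"
  by (simp add: cmat2_eq_iff)

lemma su2_dist_mk: "su2_dist (mk p q) (mk r s) = sqrt ((cmod (p - r))^2 + (cmod (q - s))^2)"
proof -
  define u v where "u = p - r" "v = q - s"
  have "(mk u v) ** conj_transpose (mk u v) = mk (u * cnj u + v * cnj v) 0"
    by (simp add: ct_mk mk_mult algebra_simps)
  then have "Re (trace ((mk u v) ** conj_transpose (mk u v))) = 2 * ((cmod u)^2 + (cmod v)^2)"
    by (simp add: trace_2 cnj_mult_self)
  then show ?thesis unfolding su2_dist_def mk_diff u_v_def[symmetric] by simp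
qed

lemma cs_ineq:
  fixes A B C D :: real
  shows "A * B + C * D \<le> sqrt ((A^2 + C^2) * (B^2 + D^2))"
proof (rule real_le_rsqrt)
  have "0 \<le> (A * D - C * B)^2" by simp
  then show "(A * B + C * D)^2 \<le> (A^2 + C^2) * (B^2 + D^2)"
    by (simp add: power2_eq_square algebra_simps)
qed

lemma X1_lip:
  assumes "x \<in> SU2" "a \<in> SU2" "b \<in> SU2"
  shows "\<bar>X1 (conj_transpose x ** a) - X1 (conj_transpose x ** b)\<bar> \<le> su2_dist a b"
proof -
  obtain c d where x: "x = mk c d" "(cmod c)^2 + (cmod d)^2 = 1" using SU2_cases[OF assms(1)] by blast
  obtain p q where a: "a = mk p q" using SU2_cases[OF assms(2)] by blast
  obtain r s where b: "b = mk r s" using SU2_cases[OF assms(3)] by blast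
  have "X1 (conj_transpose x ** a) - X1 (conj_transpose x ** b) = Re (cnj c * (p - r) + d * cnj (q - s))"
    by (simp add: X1_def x a b ct_mk mk_mult algebra_simps)
  also have "\<bar>\<dots>\<bar> \<le> cmod (cnj c * (p - r) + d * cnj (q - s))" by (rule abs_Re_le_cmod)
  also have "\<dots> \<le> cmod c * cmod (p - r) + cmod d * cmod (q - s)"
    by (metis norm_triangle_ineq complex_mod_cnj norm_mult)
  also have "\<dots> \<le> sqrt (((cmod c)^2 + (cmod d)^2) * ((cmod (p - r))^2 + (cmod (q - s))^2))"
    by (rule cs_ineq)
  also have "\<dots> = su2_dist a b" by (simp add: x(2) a b su2_dist_mk)
  finally show ?thesis .
qed


lemma sum_even_split:
  fixes f :: "nat \<Rightarrow> real"
  shows "(\<Sum>i\<le>2*r. f i) = (\<Sum>l\<le>r. f (2*l)) + (\<Sum>l<r. f (2*l+1))"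
proof (induction r)
  case 0 then show ?case by simp
next
  case (Suc r)
  have e: "2 * Suc r = Suc (Suc (2 * r))" by simp
  show ?case unfolding e sum.atMost_Suc sum.lessThan_Suc Suc by simp
qed

lemma onepw: "(1 + w^2)^r = (\<Sum>i\<le>2*r. (if even i then real (r choose (i div 2)) else 0) * (w::real)^i)"
proof -
  have "(1 + w^2)^r = (w^2 + 1)^r" by (simp add: add.commute)
  also have "\<dots> = (\<Sum>k\<le>r. real (r choose k) * w^(2*k))"
    unfolding binomial_ring by (simp add: power_mult)
  also have "\<dots> = (\<Sum>i\<le>2*r. (if even i then real (r choose (i div 2)) else 0) * w^i)"
    unfolding sum_even_split by simp
  finally show ?thesis .
qed

lemma pow_aux: "i \<le> n \<Longrightarrow> (s::real) > 0 \<Longrightarrow> (1/s)^(n-i) * (w/s)^i * s^n = w^i"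
proof -
  assume "i \<le> n" "s > 0"
  then obtain j where n: "n = i + j" using le_iff_add by blast
  show ?thesis using \<open>s > 0\<close> by (simp add: n power_add power_divide field_simps)
qed

lemma coeff_extract:
  fixes c :: "nat \<Rightarrow> real"
  assumes r: "r \<ge> 1"
    and h: "\<And>\<phi>. (\<Sum>i\<le>2*r. c i * (cos \<phi> ^ (2*r-i) * sin \<phi> ^ i)) = c 0"
  shows "c 2 = real r * c 0"
proof -
  define d where "d i = (if even i then real (r choose (i div 2)) else 0)" for i
  have P: "\<forall>w. (\<Sum>i\<le>2*r. c i * w^i) = (\<Sum>i\<le>2*r. (c 0 * d i) * w^i)"
  proof
    fix w :: real
    define s where "s = sqrt (1 + w^2)"
    have s0: "s > 0" unfolding s_def by (simp add: add_pos_nonneg)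
    have s2: "s^2 = 1 + w^2" unfolding s_def by simp
    have cs: "cos (arctan w) = 1/s" "sin (arctan w) = w/s" unfolding cos_arctan sin_arctan s_def by simp_all
    have "(\<Sum>i\<le>2*r. c i * ((1/s) ^ (2*r-i) * (w/s) ^ i)) = c 0"
      using h[of "arctan w"] unfolding cs .
    then have "(\<Sum>i\<le>2*r. c i * ((1/s) ^ (2*r-i) * (w/s) ^ i)) * s^(2*r) = c 0 * s^(2*r)" by simp
    then have "(\<Sum>i\<le>2*r. c i * w^i) = c 0 * s^(2*r)"
    proof -
      have "(\<Sum>i\<le>2*r. c i * ((1/s) ^ (2*r-i) * (w/s) ^ i)) * s^(2*r) = (\<Sum>i\<le>2*r. c i * w^i)"
        unfolding sum_distrib_right
      proof (rule sum.cong[OF refl])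
        fix i assume "i \<in> {..2*r}"
        then have "(1/s) ^ (2*r-i) * (w/s) ^ i * s^(2*r) = w^i" using pow_aux[OF _ s0] by simp
        then show "c i * ((1/s) ^ (2*r-i) * (w/s) ^ i) * s^(2*r) = c i * w^i"
          by (metis mult.assoc)
      qed
      then show ?thesis using \<open>_ = c 0 * s^(2*r)\<close> by simp
    qed
    also have "\<dots> = c 0 * (1 + w^2)^r" by (simp add: power_mult s2)
    also have "\<dots> = (\<Sum>i\<le>2*r. (c 0 * d i) * w^i)" unfolding onepw d_def
      by (simp add: sum_distrib_left mult.assoc)
    finally show "(\<Sum>i\<le>2*r. c i * w^i) = (\<Sum>i\<le>2*r. (c 0 * d i) * w^i)" .
  qed
  then have "\<forall>i\<le>2*r. c i = c 0 * d i" using polyfun_eq_coeffs[where n="2*r" and c=c and d="\<lambda>i. c 0 * d i"] by blast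
  moreover have "2 \<le> 2 * r" using r by simp
  ultimately have "c 2 = c 0 * d 2" by blast
  then show ?thesis by (simp add: d_def)
qed


lemma norm_vec_le_sum: "norm (x::'a::real_normed_vector^'n) \<le> (\<Sum>i\<in>UNIV. norm (x$i))"
  unfolding norm_vec_def using L2_set_le_sum[of UNIV "\<lambda>i. norm (x$i)"] by simp

lemma SU2_norm_le: "y \<in> SU2 \<Longrightarrow> norm y \<le> 4"
proof -
  assume "y \<in> SU2"
  then obtain a b where y: "y = mk a b" "(cmod a)^2 + (cmod b)^2 = 1" by (rule SU2_cases)
  have a: "cmod a \<le> 1" using cmod_le_1[OF y(2)] .
  have b: "cmod b \<le> 1" using cmod_le_1[of b a] y(2) by (simp add: add.commute)
  have r: "norm (y $ i) \<le> 2" for i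
  proof -
    have "norm (y $ i) \<le> norm (y$i$1) + norm (y$i$2)" using norm_vec_le_sum[of "y$i"] by (simp add: sum_2)
    also have "\<dots> \<le> 2"
      using exhaust_2[of i] a b by (elim disjE) (simp_all add: y(1))
    finally show ?thesis .
  qed
  have "norm y \<le> norm (y$1) + norm (y$2)" using norm_vec_le_sum[of y] by (simp add: sum_2)
  also have "\<dots> \<le> 4" using r[of 1] r[of 2] by simp
  finally show ?thesis .
qed

lemma continuous_ct: "continuous_on S conj_transpose"
  unfolding conj_transpose_def by (intro continuous_intros)

lemma closed_SU2: "closed SU2"
proof -
  have c1: "continuous_on UNIV (\<lambda>U::cmat2. U ** conj_transpose U)"
    unfolding matrix_matrix_mult_def conj_transpose_def by (intro continuous_intros)
  have c2: "continuous_on UNIV (\<lambda>U::cmat2. det U)"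
    unfolding det_2 by (intro continuous_intros)
  have e: "SU2 = {U. U ** conj_transpose U = mat 1} \<inter> {U. det U = 1}" unfolding SU2_def by blast
  have "closed {U::cmat2. U ** conj_transpose U = mat 1}"
    by (rule closed_Collect_eq[OF c1 continuous_on_const])
  moreover have "closed {U::cmat2. det U = 1}"
    by (rule closed_Collect_eq[OF c2 continuous_on_const])
  ultimately show ?thesis unfolding e by (rule closed_Int)
qed

lemma compact_SU2: "compact SU2"
  unfolding compact_eq_bounded_closed bounded_iff using closed_SU2 SU2_norm_le by blast

lemma haar_prob: "is_haar_SU2 \<mu> \<Longrightarrow> finite_measure \<mu>"
  by (rule finite_measureI) (auto simp: is_haar_SU2_def)

lemma haar_space: "is_haar_SU2 \<mu> \<Longrightarrow> space \<mu> = SU2"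
  by (simp add: is_haar_SU2_def)

lemma haar_meas:
  assumes "is_haar_SU2 \<mu>" "continuous_on SU2 F"
  shows "F \<in> borel_measurable \<mu>"
proof -
  have "sets \<mu> = sets (restrict_space borel SU2)" using assms(1) by (simp add: is_haar_SU2_def)
  then show ?thesis using borel_measurable_continuous_on_restrict[OF assms(2)]
    measurable_cong_sets[OF \<open>sets \<mu> = _\<close> refl, of borel] by simp
qed

lemma haar_integrable:
  fixes F :: "cmat2 \<Rightarrow> real"
  assumes "is_haar_SU2 \<mu>" "continuous_on SU2 F"
  shows "integrable \<mu> F"
proof -
  interpret finite_measure \<mu> using haar_prob[OF assms(1)] .
  have "compact (F ` SU2)" using compact_continuous_image[OF assms(2) compact_SU2] .
  then obtain B where B: "\<forall>x\<in>F ` SU2. norm x \<le> B" using compact_imp_bounded[of "F ` SU2"] unfolding bounded_iff by blast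
  show ?thesis
  proof (rule integrable_const_bound[where B=B])
    show "AE x in \<mu>. norm (F x) \<le> B" using B haar_space[OF assms(1)] by (intro AE_I2) auto
    show "F \<in> borel_measurable \<mu>" by (rule haar_meas[OF assms])
  qed
qed

lemma Lg_meas:
  assumes "is_haar_SU2 \<mu>" "g \<in> SU2"
  shows "(\<lambda>y. g ** y) \<in> measurable \<mu> \<mu>"
proof -
  have s: "sets \<mu> = sets (restrict_space borel SU2)" using assms(1) by (simp add: is_haar_SU2_def)
  have c: "continuous_on UNIV (\<lambda>y::cmat2. g ** y)"
    unfolding matrix_matrix_mult_def by (intro continuous_intros)
  have "(\<lambda>y. g ** y) \<in> measurable (restrict_space borel SU2) (restrict_space borel SU2)"
    by (rule measurable_restrict_space3[OF borel_measurable_continuous_onI[OF c]])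
       (use assms(2) SU2_mult in auto)
  then show ?thesis by (simp add: measurable_cong_sets[OF s s])
qed

lemma distr_Lg:
  assumes h: "is_haar_SU2 \<mu>" and g: "g \<in> SU2"
  shows "distr \<mu> \<mu> (\<lambda>y. g ** y) = \<mu>"
proof (rule measure_eqI)
  show "sets (distr \<mu> \<mu> (\<lambda>y. g ** y)) = sets \<mu>" by simp
  fix A assume "A \<in> sets (distr \<mu> \<mu> (\<lambda>y. g ** y))"
  then have A: "A \<in> sets \<mu>" by simp
  then have AS: "A \<subseteq> SU2" using sets.sets_into_space haar_space[OF h] by blast
  have gi: "conj_transpose g \<in> SU2" using ct_SU2[OF g] .
  have eq: "(\<lambda>y. g ** y) -` A \<inter> space \<mu> = (\<lambda>y. conj_transpose g ** y) ` A"
  proof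
    show "(\<lambda>y. g ** y) -` A \<inter> space \<mu> \<subseteq> (\<lambda>y. conj_transpose g ** y) ` A"
    proof
      fix y assume "y \<in> (\<lambda>y. g ** y) -` A \<inter> space \<mu>"
      then have "g ** y \<in> A" by simp
      moreover have "y = conj_transpose g ** (g ** y)"
        by (simp add: matrix_mul_assoc ct_mult_SU2[OF g])
      ultimately show "y \<in> (\<lambda>y. conj_transpose g ** y) ` A" by blast
    qed
    show "(\<lambda>y. conj_transpose g ** y) ` A \<subseteq> (\<lambda>y. g ** y) -` A \<inter> space \<mu>"
    proof
      fix y assume "y \<in> (\<lambda>y. conj_transpose g ** y) ` A"
      then obtain z where z: "z \<in> A" "y = conj_transpose g ** z" by blast
      have "g ** y = z" by (simp add: z(2) matrix_mul_assoc ct_mult_SU2[OF g])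
      moreover have "y \<in> SU2" using z AS gi SU2_mult by blast
      ultimately show "y \<in> (\<lambda>y. g ** y) -` A \<inter> space \<mu>" using z haar_space[OF h] by simp
    qed
  qed
  have "emeasure (distr \<mu> \<mu> (\<lambda>y. g ** y)) A = emeasure \<mu> ((\<lambda>y. g ** y) -` A \<inter> space \<mu>)"
    using A Lg_meas[OF h g] by (simp add: emeasure_distr)
  also have "\<dots> = emeasure \<mu> A" unfolding eq using h gi A by (simp add: is_haar_SU2_def)
  finally show "emeasure (distr \<mu> \<mu> (\<lambda>y. g ** y)) A = emeasure \<mu> A" .
qed

lemma haar_shift:
  fixes F :: "cmat2 \<Rightarrow> real"
  assumes h: "is_haar_SU2 \<mu>" and g: "g \<in> SU2" and F: "F \<in> borel_measurable \<mu>"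
  shows "(\<integral>y. F (g ** y) \<partial>\<mu>) = (\<integral>y. F y \<partial>\<mu>)"
proof -
  have "(\<integral>y. F (g ** y) \<partial>\<mu>) = integral\<^sup>L (distr \<mu> \<mu> (\<lambda>y. g ** y)) F"
    by (rule integral_distr[OF Lg_meas[OF h g] F, symmetric])
  also have "\<dots> = integral\<^sup>L \<mu> F" by (subst distr_Lg[OF h g]) (rule refl)
  finally show ?thesis .
qed


definition X2 :: "cmat2 \<Rightarrow> real" where "X2 y = Im (y $ 1 $ 1)"
definition X3 :: "cmat2 \<Rightarrow> real" where "X3 y = Re (y $ 1 $ 2)"
definition X4 :: "cmat2 \<Rightarrow> real" where "X4 y = Im (y $ 1 $ 2)"

lemma cont_X[continuous_intros]:
  "continuous_on S X1" "continuous_on S X2" "continuous_on S X3" "continuous_on S X4"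
  unfolding X1_def X2_def X3_def X4_def by (intro continuous_intros)+

lemma sphere4: "y \<in> SU2 \<Longrightarrow> (X1 y)^2 + (X2 y)^2 + (X3 y)^2 + (X4 y)^2 = 1"
  using SU2_D(2)[of y] unfolding X1_def X2_def X3_def X4_def cmod_power2 by simp

lemma R2: fixes \<phi> :: real shows "mk (cis \<phi>) 0 \<in> SU2 \<and> (\<forall>y\<in>SU2. X1 (mk (cis \<phi>) 0 ** y) = cos \<phi> * X1 y - sin \<phi> * X2 y)"
proof safe
  show "mk (cis \<phi>) 0 \<in> SU2" by (simp add: SU2_mk_iff)
  fix y assume "y \<in> SU2"
  then obtain a b where y: "y = mk a b" by (rule SU2_cases)
  show "X1 (mk (cis \<phi>) 0 ** y) = cos \<phi> * X1 y - sin \<phi> * X2 y"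
    by (simp add: y mk_mult X1_def X2_def)
qed

lemma R3: fixes \<phi> :: real shows "mk (complex_of_real (cos \<phi>)) (complex_of_real (sin \<phi>)) \<in> SU2 \<and> (\<forall>y\<in>SU2. X1 (mk (complex_of_real (cos \<phi>)) (complex_of_real (sin \<phi>)) ** y) = cos \<phi> * X1 y - sin \<phi> * X3 y)"
proof safe
  show "mk (complex_of_real (cos \<phi>)) (complex_of_real (sin \<phi>)) \<in> SU2" by (simp add: SU2_mk_iff)
  fix y assume "y \<in> SU2"
  then obtain a b where y: "y = mk a b" by (rule SU2_cases)
  show "X1 (mk (complex_of_real (cos \<phi>)) (complex_of_real (sin \<phi>)) ** y) = cos \<phi> * X1 y - sin \<phi> * X3 y"
    by (simp add: y mk_mult X1_def X3_def)
qed

lemma R4: fixes \<phi> :: real shows "mk (complex_of_real (cos \<phi>)) (\<i> * complex_of_real (sin \<phi>)) \<in> SU2 \<and> (\<forall>y\<in>SU2. X1 (mk (complex_of_real (cos \<phi>)) (\<i> * complex_of_real (sin \<phi>)) ** y) = cos \<phi> * X1 y - sin \<phi> * X4 y)"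
proof safe
  show "mk (complex_of_real (cos \<phi>)) (\<i> * complex_of_real (sin \<phi>)) \<in> SU2" by (simp add: SU2_mk_iff norm_mult)
  fix y assume "y \<in> SU2"
  then obtain a b where y: "y = mk a b" by (rule SU2_cases)
  show "X1 (mk (complex_of_real (cos \<phi>)) (\<i> * complex_of_real (sin \<phi>)) ** y) = cos \<phi> * X1 y - sin \<phi> * X4 y"
    by (simp add: y mk_mult X1_def X4_def)
qed

lemma choose_2r: "real (2*r choose 2) = real r * (2 * real r - 1)"
proof -
  have "(2*r choose 2) = (2*r) * (2*r - 1) div 2" by (simp add: choose_two)
  also have "\<dots> = r * (2*r - 1)" by simp
  finally have "(2*r choose 2) = r * (2*r - 1)" .
  then have "real (2*r choose 2) = real r * real (2*r - 1)" by simp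
  also have "\<dots> = real r * (2 * real r - 1)" by (cases "r = 0") (simp_all add: of_nat_diff)
  finally show ?thesis .
qed

lemma rot_moment:
  fixes Z :: "cmat2 \<Rightarrow> real"
  assumes h: "is_haar_SU2 \<mu>" and Zc: "continuous_on SU2 Z"
    and rot: "\<And>\<phi>. \<exists>g\<in>SU2. \<forall>y\<in>SU2. X1 (g ** y) = cos \<phi> * X1 y - sin \<phi> * Z y"
    and r: "r \<ge> 1"
  shows "(2 * real r - 1) * (\<integral>y. X1 y ^ (2*r-2) * Z y ^ 2 \<partial>\<mu>) = (\<integral>y. X1 y ^ (2*r) \<partial>\<mu>)"
proof -
  define k where "k = 2 * r"
  define c where "c i = real (k choose i) * (-1)^i * (\<integral>y. X1 y ^ (k-i) * Z y ^ i \<partial>\<mu>)" for i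
  have sp: "space \<mu> = SU2" using h by (rule haar_space)
  have cX: "continuous_on SU2 (\<lambda>y. X1 y ^ a * Z y ^ b)" for a b
    by (intro continuous_intros Zc)
  have key: "(\<Sum>i\<le>k. c i * (cos \<phi> ^ (k-i) * sin \<phi> ^ i)) = c 0" for \<phi>
  proof -
    obtain g where g: "g \<in> SU2" "\<forall>y\<in>SU2. X1 (g ** y) = cos \<phi> * X1 y - sin \<phi> * Z y"
      using rot[of \<phi>] by blast
    have "c 0 = (\<integral>y. X1 y ^ k \<partial>\<mu>)" by (simp add: c_def)
    also have "\<dots> = (\<integral>y. X1 (g ** y) ^ k \<partial>\<mu>)"
      by (rule haar_shift[OF h g(1), symmetric]) (intro haar_meas[OF h] continuous_intros)
    also have "\<dots> = (\<integral>y. (\<Sum>i\<le>k. (real (k choose i) * (-1)^i * (cos \<phi> ^ (k-i) * sin \<phi> ^ i))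
                        * (X1 y ^ (k-i) * Z y ^ i)) \<partial>\<mu>)"
    proof (rule Bochner_Integration.integral_cong[OF refl])
      fix y assume "y \<in> space \<mu>"
      then have "X1 (g ** y) = (- sin \<phi> * Z y) + cos \<phi> * X1 y" using g sp by simp
      then have "X1 (g ** y) ^ k = ((- sin \<phi> * Z y) + cos \<phi> * X1 y) ^ k" by simp
      also have "\<dots> = (\<Sum>i\<le>k. real (k choose i) * (- sin \<phi> * Z y) ^ i * (cos \<phi> * X1 y) ^ (k - i))"
        by (rule binomial_ring)
      also have "\<dots> = (\<Sum>i\<le>k. (real (k choose i) * (-1)^i * (cos \<phi> ^ (k-i) * sin \<phi> ^ i))
                        * (X1 y ^ (k-i) * Z y ^ i))"
        by (rule sum.cong[OF refl]) (simp add: power_mult_distrib power_minus[of "sin \<phi> * Z y"])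
      finally show "X1 (g ** y) ^ k = (\<Sum>i\<le>k. (real (k choose i) * (-1)^i * (cos \<phi> ^ (k-i) * sin \<phi> ^ i))
                        * (X1 y ^ (k-i) * Z y ^ i))" .
    qed
    also have "\<dots> = (\<Sum>i\<le>k. (real (k choose i) * (-1)^i * (cos \<phi> ^ (k-i) * sin \<phi> ^ i))
                        * (\<integral>y. X1 y ^ (k-i) * Z y ^ i \<partial>\<mu>))"
    proof (subst Bochner_Integration.integral_sum)
      fix i show "integrable \<mu> (\<lambda>y. (real (k choose i) * (-1)^i * (cos \<phi> ^ (k-i) * sin \<phi> ^ i))
                        * (X1 y ^ (k-i) * Z y ^ i))"
        by (intro integrable_mult_right haar_integrable[OF h] cX)
    qed (simp add: integral_mult_right_zero)
    also have "\<dots> = (\<Sum>i\<le>k. c i * (cos \<phi> ^ (k-i) * sin \<phi> ^ i))"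
      by (simp add: c_def mult_ac)
    finally show ?thesis by simp
  qed
  have "c 2 = real r * c 0"
    by (rule coeff_extract[OF r]) (use key in \<open>simp add: k_def\<close>)
  then have "real r * (2 * real r - 1) * (\<integral>y. X1 y ^ (2*r-2) * Z y ^ 2 \<partial>\<mu>) = real r * (\<integral>y. X1 y ^ (2*r) \<partial>\<mu>)"
    by (simp add: c_def k_def choose_2r)
  then show ?thesis using r by simp
qed

definition mom :: "cmat2 measure \<Rightarrow> nat \<Rightarrow> real" where
  "mom \<mu> k = (\<integral>y. X1 y ^ k \<partial>\<mu>)"

lemma mom_0: assumes h: "is_haar_SU2 \<mu>" shows "mom \<mu> 0 = 1"
proof -
  have "emeasure \<mu> (space \<mu>) = 1" using h unfolding is_haar_SU2_def by blast
  then have "measure \<mu> (space \<mu>) = 1" by (simp add: measure_def)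
  then show ?thesis by (simp add: mom_def)
qed

lemma mom_odd:
  assumes h: "is_haar_SU2 \<mu>" and k: "odd k"
  shows "mom \<mu> k = 0"
proof -
  have g: "mk (-1) 0 \<in> SU2" by (simp add: SU2_mk_iff)
  have sp: "space \<mu> = SU2" using h by (rule haar_space)
  have "mom \<mu> k = (\<integral>y. X1 (mk (-1) 0 ** y) ^ k \<partial>\<mu>)" unfolding mom_def
    by (rule haar_shift[OF h g, symmetric]) (intro haar_meas[OF h] continuous_intros)
  also have "\<dots> = (\<integral>y. - (X1 y ^ k) \<partial>\<mu>)"
  proof (rule Bochner_Integration.integral_cong[OF refl])
    fix y assume "y \<in> space \<mu>"
    then obtain a b where y: "y = mk a b" using sp SU2_cases by blast
    show "X1 (mk (-1) 0 ** y) ^ k = - (X1 y ^ k)" using k by (simp add: y mk_mult X1_def)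
  qed
  also have "\<dots> = - mom \<mu> k" by (simp add: mom_def)
  finally show ?thesis by simp
qed

lemma mom_rec:
  assumes h: "is_haar_SU2 \<mu>"
  shows "mom \<mu> (k+2) * (real k + 4) = (real k + 1) * mom \<mu> k"
proof (cases "odd k")
  case True
  then show ?thesis using mom_odd[OF h] by simp
next
  case False
  define r where "r = k div 2 + 1"
  have r: "k = 2 * r - 2" "r \<ge> 1" using False by (auto simp: r_def)
  have sp: "space \<mu> = SU2" using h by (rule haar_space)
  have rot2: "\<exists>g\<in>SU2. \<forall>y\<in>SU2. X1 (g ** y) = cos \<phi> * X1 y - sin \<phi> * X2 y" for \<phi> using R2 by blast
  have rot3: "\<exists>g\<in>SU2. \<forall>y\<in>SU2. X1 (g ** y) = cos \<phi> * X1 y - sin \<phi> * X3 y" for \<phi> using R3 by blast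
  have rot4: "\<exists>g\<in>SU2. \<forall>y\<in>SU2. X1 (g ** y) = cos \<phi> * X1 y - sin \<phi> * X4 y" for \<phi> using R4 by blast
  note e2 = rot_moment[OF h _ rot2 r(2)] and e3 = rot_moment[OF h _ rot3 r(2)] and e4 = rot_moment[OF h _ rot4 r(2)]
  have I: "integrable \<mu> (\<lambda>y. X1 y ^ a * Z y ^ b)" if "continuous_on SU2 Z" for a b Z
    by (intro haar_integrable[OF h] continuous_intros that)
  have I1: "integrable \<mu> (\<lambda>y. X1 y ^ a)" for a
    by (intro haar_integrable[OF h] continuous_intros)
  have "(\<integral>y. X1 y ^ (2*r-2) * X2 y ^ 2 \<partial>\<mu>) + (\<integral>y. X1 y ^ (2*r-2) * X3 y ^ 2 \<partial>\<mu>)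
      + (\<integral>y. X1 y ^ (2*r-2) * X4 y ^ 2 \<partial>\<mu>)
      = (\<integral>y. X1 y ^ (2*r-2) * X2 y ^ 2 + X1 y ^ (2*r-2) * X3 y ^ 2 + X1 y ^ (2*r-2) * X4 y ^ 2 \<partial>\<mu>)"
    by (subst Bochner_Integration.integral_add, (intro Bochner_Integration.integrable_add I cont_X)+)
       (subst Bochner_Integration.integral_add, (intro I cont_X)+, simp)
  also have "\<dots> = (\<integral>y. X1 y ^ (2*r-2) - X1 y ^ (2*r) \<partial>\<mu>)"
  proof (rule Bochner_Integration.integral_cong[OF refl])
    fix y assume "y \<in> space \<mu>"
    then have s: "X2 y ^ 2 + X3 y ^ 2 + X4 y ^ 2 = 1 - X1 y ^ 2" using sphere4[of y] sp by simp
    have p: "X1 y ^ (2*r) = X1 y ^ (2*r-2) * X1 y ^ 2" using r(2) by (cases r) (simp_all add: power2_eq_square)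
    show "X1 y ^ (2*r-2) * X2 y ^ 2 + X1 y ^ (2*r-2) * X3 y ^ 2 + X1 y ^ (2*r-2) * X4 y ^ 2
        = X1 y ^ (2*r-2) - X1 y ^ (2*r)"
    proof -
      define P where "P = X1 y ^ (2*r-2)"
      have "P * X2 y ^ 2 + P * X3 y ^ 2 + P * X4 y ^ 2 = P * (X2 y ^ 2 + X3 y ^ 2 + X4 y ^ 2)"
        by (simp add: algebra_simps)
      also have "\<dots> = P - P * X1 y ^ 2" unfolding s by (simp add: algebra_simps)
      finally show ?thesis unfolding p P_def .
    qed
  qed
  also have "\<dots> = mom \<mu> (2*r-2) - mom \<mu> (2*r)"
    unfolding mom_def by (rule Bochner_Integration.integral_diff[OF I1 I1])
  finally have sum: "(\<integral>y. X1 y ^ (2*r-2) * X2 y ^ 2 \<partial>\<mu>) + (\<integral>y. X1 y ^ (2*r-2) * X3 y ^ 2 \<partial>\<mu>)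
      + (\<integral>y. X1 y ^ (2*r-2) * X4 y ^ 2 \<partial>\<mu>) = mom \<mu> (2*r-2) - mom \<mu> (2*r)" .
  have "(2 * real r - 1) * (mom \<mu> (2*r-2) - mom \<mu> (2*r)) = 3 * mom \<mu> (2*r)"
    unfolding sum[symmetric] distrib_left using e2 e3 e4 by (simp add: cont_X mom_def)
  moreover have k2: "k + 2 = 2 * r" using r by presburger
  moreover have "mom \<mu> (k + 2) = mom \<mu> (2 * r)" by (simp only: k2)
  moreover have "mom \<mu> k = mom \<mu> (2 * r - 2)" using r by simp
  moreover have "real k = 2 * real r - 2" using r by (simp add: of_nat_diff)
  moreover have "(2 * x - 1) * (A - B) = 3 * B \<Longrightarrow> B * ((2 * x - 2) + 4) = ((2 * x - 2) + 1) * A" for x A B :: real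
    by (simp add: algebra_simps)
  ultimately show ?thesis by metis
qed


lemma ftc_real:
  fixes F f :: "real \<Rightarrow> real"
  assumes "a \<le> b" "\<And>x. (F has_real_derivative f x) (at x)"
  shows "(f has_integral (F b - F a)) {a..b}"
  by (rule fundamental_theorem_of_calculus[OF assms(1)])
     (metis assms(2) has_real_derivative_iff_has_vector_derivative has_field_derivative_at_within)

lemma d_W0: "((\<lambda>\<theta>. \<theta>/2 - sin(2*\<theta>)/4) has_real_derivative (sin \<theta>)^2) (at \<theta>)"
proof -
  have "((\<lambda>\<theta>. \<theta>/2 - sin(2*\<theta>)/4) has_real_derivative (1/2 - cos(2*\<theta>) * 2 / 4)) (at \<theta>)"
    by (auto intro!: derivative_eq_intros)
  moreover have "1/2 - cos(2*\<theta>) * 2 / 4 = (sin \<theta>)^2" unfolding cos_double_sin by (simp add: field_simps)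
  ultimately show ?thesis by simp
qed

lemma d_W1: "((\<lambda>\<theta>. sin \<theta> ^ 3 / 3) has_real_derivative (cos \<theta> * sin \<theta> ^ 2)) (at \<theta>)"
proof -
  have "((\<lambda>\<theta>. sin \<theta> ^ 3 / 3) has_real_derivative (3 * sin \<theta> ^ 2 * cos \<theta> / 3)) (at \<theta>)"
    by (auto intro!: derivative_eq_intros)
  then show ?thesis by (simp add: mult.commute)
qed

lemma alg_Wrec: "u ^ 2 + v ^ 2 = (1::real) \<Longrightarrow>
   (K + 1) * (- v) * P * v ^ 3 + (P * u) * (3 * u * v ^ 2) = (K + 4) * (P * u ^ 2 * v ^ 2) - (K + 1) * (P * v ^ 2)"
  by algebra

lemma d_Wrec: "((\<lambda>\<theta>. cos \<theta> ^ (k+1) * sin \<theta> ^ 3) has_real_derivative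
   ((real k + 4) * (cos \<theta> ^ (k+2) * sin \<theta> ^ 2) - (real k + 1) * (cos \<theta> ^ k * sin \<theta> ^ 2))) (at \<theta>)"
proof -
  have c: "((\<lambda>\<theta>. cos \<theta> ^ (k+1)) has_real_derivative (real (k+1) * (- sin \<theta>) * cos \<theta> ^ k)) (at \<theta>)"
    using DERIV_power[OF DERIV_cos[of \<theta>], where n="k+1"] by (simp add: mult.assoc)
  have s: "((\<lambda>\<theta>. sin \<theta> ^ 3) has_real_derivative (real 3 * cos \<theta> * sin \<theta> ^ 2)) (at \<theta>)"
    using DERIV_power[OF DERIV_sin[of \<theta>], where n=3] by (simp add: mult.assoc)
  have "((\<lambda>\<theta>. cos \<theta> ^ (k+1) * sin \<theta> ^ 3) has_real_derivative
      (real (k+1) * (- sin \<theta>) * cos \<theta> ^ k * sin \<theta> ^ 3 + real 3 * cos \<theta> * sin \<theta> ^ 2 * cos \<theta> ^ (k+1))) (at \<theta>)"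
    by (rule DERIV_mult[OF c s])
  moreover have "real (k+1) * (- sin \<theta>) * cos \<theta> ^ k * sin \<theta> ^ 3 + real 3 * cos \<theta> * sin \<theta> ^ 2 * cos \<theta> ^ (k+1)
     = (real k + 4) * (cos \<theta> ^ (k+2) * sin \<theta> ^ 2) - (real k + 1) * (cos \<theta> ^ k * sin \<theta> ^ 2)"
  proof -
    have e1: "cos \<theta> ^ (k+1) = cos \<theta> ^ k * cos \<theta>" "cos \<theta> ^ (k+2) = cos \<theta> ^ k * cos \<theta> ^ 2"
      by (simp_all add: power_add power2_eq_square)
    show ?thesis using alg_Wrec[of "cos \<theta>" "sin \<theta>" "real k" "cos \<theta> ^ k"]
      unfolding e1 by (simp add: algebra_simps)
  qed
  ultimately show ?thesis by simp
qed

definition W :: "nat \<Rightarrow> real" where "W k = integral {0..pi} (\<lambda>\<theta>. cos \<theta> ^ k * sin \<theta> ^ 2)"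

lemma W_int: "(\<lambda>\<theta>. cos \<theta> ^ k * sin \<theta> ^ 2) integrable_on {0..pi}"
  by (intro integrable_continuous_interval continuous_intros)

lemma W_0: "W 0 = pi / 2"
proof -
  have "((\<lambda>\<theta>. (sin \<theta>)^2) has_integral ((pi/2 - sin(2*pi)/4) - (0/2 - sin(2*0)/4))) {0..pi}"
    by (rule ftc_real[OF _ d_W0]) simp
  then show ?thesis unfolding W_def by (simp add: integral_unique)
qed

lemma W_1: "W 1 = 0"
proof -
  have "((\<lambda>\<theta>. cos \<theta> * sin \<theta> ^ 2) has_integral (sin pi ^ 3 / 3 - sin 0 ^ 3 / 3)) {0..pi}"
    by (rule ftc_real[OF _ d_W1]) simp
  then show ?thesis unfolding W_def by (simp add: integral_unique)
qed

lemma W_rec: "W (k+2) * (real k + 4) = (real k + 1) * W k"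
proof -
  have "((\<lambda>\<theta>. (real k + 4) * (cos \<theta> ^ (k+2) * sin \<theta> ^ 2) - (real k + 1) * (cos \<theta> ^ k * sin \<theta> ^ 2))
     has_integral (cos pi ^ (k+1) * sin pi ^ 3 - cos 0 ^ (k+1) * sin 0 ^ 3)) {0..pi}"
    by (rule ftc_real[OF _ d_Wrec]) simp
  then have z: "((\<lambda>\<theta>. (real k + 4) * (cos \<theta> ^ (k+2) * sin \<theta> ^ 2) - (real k + 1) * (cos \<theta> ^ k * sin \<theta> ^ 2))
     has_integral 0) {0..pi}" by simp
  have i1: "((\<lambda>\<theta>. cos \<theta> ^ (k+2) * sin \<theta> ^ 2) has_integral W (k+2)) {0..pi}"
    unfolding W_def by (rule integrable_integral[OF W_int])
  have i0: "((\<lambda>\<theta>. cos \<theta> ^ k * sin \<theta> ^ 2) has_integral W k) {0..pi}"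
    unfolding W_def by (rule integrable_integral[OF W_int])
  have "((\<lambda>\<theta>. (real k + 4) * (cos \<theta> ^ (k+2) * sin \<theta> ^ 2) - (real k + 1) * (cos \<theta> ^ k * sin \<theta> ^ 2))
     has_integral ((real k + 4) * W (k+2) - (real k + 1) * W k)) {0..pi}"
    by (intro has_integral_diff has_integral_mult_right i1 i0)
  then have "(real k + 4) * W (k+2) - (real k + 1) * W k = 0" using z by (rule has_integral_unique)
  then show ?thesis by (simp add: algebra_simps)
qed

lemma mom_W:
  assumes h: "is_haar_SU2 \<mu>"
  shows "mom \<mu> k = 2 / pi * W k"
proof (induction k rule: nat_less_induct)
  case (1 n)
  show ?case
  proof (cases n)
    case 0 then show ?thesis using mom_0[OF h] W_0 by simp
  next
    case (Suc m)
    show ?thesis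
    proof (cases m)
      case 0 then show ?thesis using Suc mom_odd[OF h, of 1] W_1 by simp
    next
      case (Suc j)
      then have n: "n = j + 2" using \<open>n = Suc m\<close> by simp
      have "mom \<mu> j = 2 / pi * W j" using 1 n by simp
      then have "mom \<mu> (j+2) * (real j + 4) = 2 / pi * W (j+2) * (real j + 4)"
        using mom_rec[OF h, of j] W_rec[of j] by (simp add: algebra_simps)
      moreover have "real j + 4 \<noteq> 0" by (simp add: add_nonneg_pos)
      ultimately show ?thesis unfolding n by (metis mult_right_cancel)
    qed
  qed
qed


fun Up :: "nat \<Rightarrow> real poly" where
  "Up 0 = 1"
| "Up (Suc 0) = [:0, 2:]"
| "Up (Suc (Suc n)) = [:0, 2:] * Up (Suc n) - Up n"

lemma U_cos: "poly (Up n) (cos \<theta>) * sin \<theta> = sin (real (Suc n) * \<theta>)"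
proof (induction n rule: Up.induct)
  case 1 then show ?case by simp
next
  case 2 then show ?case by (simp add: sin_double)
next
  case (3 n)
  define x where "x = real (Suc (Suc n)) * \<theta>"
  have a: "real (Suc (Suc (Suc n))) * \<theta> = x + \<theta>" "real (Suc n) * \<theta> = x - \<theta>"
    by (simp_all add: x_def algebra_simps)
  have "poly (Up (Suc (Suc n))) (cos \<theta>) * sin \<theta>
      = 2 * cos \<theta> * (poly (Up (Suc n)) (cos \<theta>) * sin \<theta>) - poly (Up n) (cos \<theta>) * sin \<theta>"
    by (simp add: algebra_simps)
  also have "\<dots> = 2 * cos \<theta> * sin x - sin (x - \<theta>)"
  proof -
    have IH1: "poly (Up (Suc n)) (cos \<theta>) * sin \<theta> = sin x" using 3 by (simp add: x_def)
    have IH2: "poly (Up n) (cos \<theta>) * sin \<theta> = sin (x - \<theta>)" using 3 unfolding a(2)[symmetric] by simp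
    show ?thesis unfolding IH1 IH2 ..
  qed
  also have "\<dots> = sin (x + \<theta>)" by (simp add: sin_add sin_diff algebra_simps)
  finally show ?case by (simp only: a(1))
qed

lemma U_one: "poly (Up n) 1 = real n + 1"
  by (induction n rule: Up.induct) (simp_all add: algebra_simps)

lemma U_mone: "poly (Up n) (-1) = (-1)^n * (real n + 1)"
  by (induction n rule: Up.induct) (simp_all add: algebra_simps)

lemma ftc0:
  fixes F f :: "real \<Rightarrow> real"
  assumes "\<And>x. (F has_real_derivative f x) (at x)" "F pi = 0" "F 0 = 0"
  shows "integral {0..pi} f = 0"
  using ftc_real[of 0 pi F f] assms by (simp add: integral_unique)

lemma sin_sq_orth:
  assumes "a \<ge> 1"
  shows "integral {0..pi} (\<lambda>\<theta>. sin (real a * \<theta>) * sin (real a * \<theta>)) = pi / 2"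
proof -
  define F where "F \<theta> = \<theta>/2 - sin (2 * real a * \<theta>) / (4 * real a)" for \<theta>
  have a0: "real a \<noteq> 0" using assms by simp
  have "(F has_real_derivative (sin (real a * \<theta>) * sin (real a * \<theta>))) (at \<theta>)" for \<theta>
  proof -
    have "(F has_real_derivative (1/2 - cos (2 * real a * \<theta>) * (2 * real a) / (4 * real a))) (at \<theta>)"
      unfolding F_def by (auto intro!: derivative_eq_intros)
    moreover have "1/2 - cos (2 * real a * \<theta>) * (2 * real a) / (4 * real a) = sin (real a * \<theta>) * sin (real a * \<theta>)"
      using cos_double_sin[of "real a * \<theta>"] a0 by (simp add: field_simps power2_eq_square mult.assoc)
    ultimately show ?thesis by simp
  qed
  then have "((\<lambda>\<theta>. sin (real a * \<theta>) * sin (real a * \<theta>)) has_integral (F pi - F 0)) {0..pi}"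
    by (intro ftc_real) simp_all
  moreover have "sin (2 * real a * pi) = 0" using sin_npi[of "2 * a"] by (simp add: mult.assoc)
  ultimately show ?thesis by (simp add: integral_unique F_def)
qed

lemma sin_orth_lt:
  assumes "b < a"
  shows "integral {0..pi} (\<lambda>\<theta>. sin (real a * \<theta>) * sin (real b * \<theta>)) = 0"
proof -
  define d s where "d = real (a - b)" and "s = real (a + b)"
  have d0: "d \<noteq> 0" "s \<noteq> 0" using assms by (simp_all add: d_def s_def)
  define F where "F \<theta> = sin (d * \<theta>) / (2 * d) - sin (s * \<theta>) / (2 * s)" for \<theta>
  show ?thesis
  proof (rule ftc0[of F])
    fix \<theta>
    have "(F has_real_derivative (cos (d * \<theta>) * d / (2 * d) - cos (s * \<theta>) * s / (2 * s))) (at \<theta>)"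
      unfolding F_def by (auto intro!: derivative_eq_intros)
    moreover have "cos (d * \<theta>) * d / (2 * d) - cos (s * \<theta>) * s / (2 * s) = sin (real a * \<theta>) * sin (real b * \<theta>)"
    proof -
      have e: "d * \<theta> = real a * \<theta> - real b * \<theta>" "s * \<theta> = real a * \<theta> + real b * \<theta>"
        using assms by (simp_all add: d_def s_def of_nat_diff algebra_simps)
      show ?thesis using d0 unfolding e cos_diff cos_add by (simp add: field_simps)
    qed
    ultimately show "(F has_real_derivative (sin (real a * \<theta>) * sin (real b * \<theta>))) (at \<theta>)" by simp
  next
    show "F pi = 0" unfolding F_def d_def s_def sin_npi by simp
    show "F 0 = 0" unfolding F_def by simp
  qed
qed

lemma sin_orth:
  assumes "a \<ge> 1" "b \<ge> 1"
  shows "integral {0..pi} (\<lambda>\<theta>. sin (real a * \<theta>) * sin (real b * \<theta>)) = (if a = b then pi / 2 else 0)"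
proof (cases "a = b")
  case True then show ?thesis using sin_sq_orth[OF assms(1)] by simp
next
  case False
  show ?thesis
  proof (cases "b < a")
    case True then show ?thesis using sin_orth_lt False by simp
  next
    case F: False
    then have "a < b" using False by simp
    then show ?thesis using sin_orth_lt[of a b] False by (simp add: mult.commute)
  qed
qed

lemma E_poly:
  assumes h: "is_haar_SU2 \<mu>"
  shows "(\<integral>y. poly p (X1 y) \<partial>\<mu>) = 2 / pi * integral {0..pi} (\<lambda>\<theta>. poly p (cos \<theta>) * sin \<theta> ^ 2)"
proof -
  have "(\<integral>y. poly p (X1 y) \<partial>\<mu>) = (\<integral>y. (\<Sum>i\<le>degree p. coeff p i * X1 y ^ i) \<partial>\<mu>)"
    by (simp add: poly_altdef)
  also have "\<dots> = (\<Sum>i\<le>degree p. coeff p i * mom \<mu> i)"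
    by (subst Bochner_Integration.integral_sum)
       (auto intro!: integrable_mult_right haar_integrable[OF h] continuous_intros simp: mom_def)
  also have "\<dots> = (\<Sum>i\<le>degree p. coeff p i * (2 / pi * W i))" by (simp add: mom_W[OF h])
  also have "\<dots> = 2 / pi * (\<Sum>i\<le>degree p. coeff p i * W i)" by (simp add: sum_distrib_left mult_ac)
  also have "(\<Sum>i\<le>degree p. coeff p i * W i) = integral {0..pi} (\<lambda>\<theta>. (\<Sum>i\<le>degree p. coeff p i * (cos \<theta> ^ i * sin \<theta> ^ 2)))"
    by (subst integral_sum) (auto simp: W_def intro!: integrable_on_mult_right W_int)
  also have "\<dots> = integral {0..pi} (\<lambda>\<theta>. poly p (cos \<theta>) * sin \<theta> ^ 2)"
    by (simp add: poly_altdef sum_distrib_right mult.assoc)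
  finally show ?thesis .
qed

lemma E_UU:
  assumes h: "is_haar_SU2 \<mu>"
  shows "(\<integral>y. poly (Up a) (X1 y) * poly (Up b) (X1 y) \<partial>\<mu>) = (if a = b then 1 else 0)"
proof -
  have "(\<integral>y. poly (Up a) (X1 y) * poly (Up b) (X1 y) \<partial>\<mu>) = (\<integral>y. poly (Up a * Up b) (X1 y) \<partial>\<mu>)"
    by simp
  also have "\<dots> = 2 / pi * integral {0..pi} (\<lambda>\<theta>. poly (Up a * Up b) (cos \<theta>) * sin \<theta> ^ 2)"
    by (rule E_poly[OF h])
  also have "integral {0..pi} (\<lambda>\<theta>. poly (Up a * Up b) (cos \<theta>) * sin \<theta> ^ 2)
     = integral {0..pi} (\<lambda>\<theta>. sin (real (Suc a) * \<theta>) * sin (real (Suc b) * \<theta>))"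
  proof -
    have "poly (Up a * Up b) (cos \<theta>) * sin \<theta> ^ 2 = sin (real (Suc a) * \<theta>) * sin (real (Suc b) * \<theta>)" for \<theta>
    proof -
      have e: "poly (Up a * Up b) (cos \<theta>) * sin \<theta> ^ 2 = (poly (Up a) (cos \<theta>) * sin \<theta>) * (poly (Up b) (cos \<theta>) * sin \<theta>)"
        by (simp add: power2_eq_square mult_ac)
      show ?thesis unfolding e U_cos ..
    qed
    then show ?thesis by simp
  qed
  also have "\<dots> = (if Suc a = Suc b then pi / 2 else 0)" by (rule sin_orth) simp_all
  finally show ?thesis by simp
qed


declare Up.simps(3)[simp del]

lemma su2_char_U:
  assumes "y \<in> SU2"
  shows "su2_char n y = poly (Up n) (X1 y)"
proof -
  define t where "t = X1 y"
  have t1: "-1 \<le> t" "t \<le> 1" using X1_bound[OF assms] by (auto simp: t_def)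
  have ang: "su2_angle y = arccos t" unfolding su2_angle_def t_def trace_SU2[OF assms] ..
  define \<theta> where "\<theta> = arccos t"
  have ct: "cos \<theta> = t" using t1 by (simp add: \<theta>_def cos_arccos)
  have th: "0 \<le> \<theta>" "\<theta> \<le> pi" using t1 by (simp_all add: \<theta>_def arccos_lbound arccos_ubound)
  show ?thesis
  proof (cases "\<theta> = 0")
    case True
    then have "t = 1" using ct by simp
    then show ?thesis using True unfolding su2_char_def ang \<theta>_def[symmetric] Let_def by (simp add: U_one t_def)
  next
    case F0: False
    show ?thesis
    proof (cases "\<theta> = pi")
      case True
      then have "t = -1" using ct by simp
      then show ?thesis using True unfolding su2_char_def ang \<theta>_def[symmetric] Let_def by (simp add: U_mone t_def)
    next
      case False
      then have "sin \<theta> > 0" using F0 th by (intro sin_gt_zero) simp_all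
      moreover have "poly (Up n) (cos \<theta>) * sin \<theta> = sin (real (Suc n) * \<theta>)" by (rule U_cos)
      ultimately have "sin (real (n + 1) * \<theta>) / sin \<theta> = poly (Up n) t" using ct by (simp add: field_simps)
      then show ?thesis using F0 False unfolding su2_char_def ang \<theta>_def[symmetric] Let_def by (simp add: t_def)
    qed
  qed
qed

definition KN :: "nat \<Rightarrow> real poly" where
  "KN N = (\<Sum>n\<le>N. smult (real (n + 1)) (Up n))"

lemma dirichlet_KN:
  assumes "y \<in> SU2"
  shows "dirichlet_kernel N y = poly (KN N) (X1 y)"
  unfolding dirichlet_kernel_def KN_def poly_sum using su2_char_U[OF assms] by simp

definition IE :: "cmat2 measure \<Rightarrow> real poly \<Rightarrow> real" where
  "IE \<mu> p = (\<integral>y. poly p (X1 y) \<partial>\<mu>)"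

lemma IE_int: "is_haar_SU2 \<mu> \<Longrightarrow> integrable \<mu> (\<lambda>y. poly p (X1 y))"
  by (intro haar_integrable continuous_intros) auto

lemma IE_add: "is_haar_SU2 \<mu> \<Longrightarrow> IE \<mu> (p + q) = IE \<mu> p + IE \<mu> q"
  unfolding IE_def by (simp add: Bochner_Integration.integral_add[OF IE_int IE_int])

lemma IE_diff: "is_haar_SU2 \<mu> \<Longrightarrow> IE \<mu> (p - q) = IE \<mu> p - IE \<mu> q"
  unfolding IE_def by (simp add: Bochner_Integration.integral_diff[OF IE_int IE_int])

lemma IE_smult: "IE \<mu> (smult c p) = c * IE \<mu> p"
  unfolding IE_def by simp

lemma IE_sum: "is_haar_SU2 \<mu> \<Longrightarrow> IE \<mu> (\<Sum>n\<in>A. f n) = (\<Sum>n\<in>A. IE \<mu> (f n))"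
  unfolding IE_def poly_sum
  by (cases "finite A") (simp_all add: Bochner_Integration.integral_sum IE_int)

lemma IE_UU: "is_haar_SU2 \<mu> \<Longrightarrow> IE \<mu> (Up a * Up b) = (if a = b then 1 else 0)"
  unfolding IE_def using E_UU by simp

definition phiP :: "nat \<Rightarrow> real poly" where
  "phiP m = smult (1/8) (smult 3 (Up (m+4)) - smult 3 (Up (m+2)) - Up (m+6) + Up m)"

lemma sum_delta_le: "(\<Sum>n\<le>N. real (n + 1) * (if a = n then 1 else 0)) = (if a \<le> N then real a + 1 else 0)"
  by (simp add: sum.delta[of "{..N}" a "\<lambda>n. real (n + 1)", simplified] if_distrib mult.commute cong: if_cong)

lemma lin4: "(\<Sum>n\<in>A. w n * c * (3 * f n - 3 * g n - h n + k n)) =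
  c * (3 * (\<Sum>n\<in>A. w n * f n) - 3 * (\<Sum>n\<in>A. w n * g n) - (\<Sum>n\<in>A. w n * h n) + (\<Sum>n\<in>A. w n * k n))"
  for w f g h k :: "nat \<Rightarrow> real"
proof -
  have "(\<Sum>n\<in>A. w n * c * (3 * f n - 3 * g n - h n + k n)) =
     (\<Sum>n\<in>A. c * 3 * (w n * f n) - c * 3 * (w n * g n) - c * (w n * h n) + c * (w n * k n))"
    by (rule sum.cong) (simp_all add: algebra_simps)
  also have "\<dots> = c * 3 * (\<Sum>n\<in>A. w n * f n) - c * 3 * (\<Sum>n\<in>A. w n * g n) - c * (\<Sum>n\<in>A. w n * h n) + c * (\<Sum>n\<in>A. w n * k n)"
    by (simp only: sum.distrib sum_subtractf sum_distrib_left)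
  finally show ?thesis by (simp add: algebra_simps)
qed

lemma key_integral:
  assumes h: "is_haar_SU2 \<mu>"
  shows "IE \<mu> (phiP m * KN (m+3)) = - (real m + 4) / 4"
proof -
  have "phiP m * KN (m+3) = (\<Sum>n\<le>m+3. smult (real (n+1) / 8)
      (smult 3 (Up (m+4) * Up n) - smult 3 (Up (m+2) * Up n) - Up (m+6) * Up n + Up m * Up n))"
    unfolding KN_def phiP_def sum_distrib_left
    by (rule sum.cong[OF refl]) (simp add: algebra_simps smult_add_right smult_diff_right)
  then have "IE \<mu> (phiP m * KN (m+3)) = (\<Sum>n\<le>m+3. real (n+1) * (1 / 8) *
      (3 * (if m+4 = n then 1 else 0) - 3 * (if m+2 = n then 1 else 0) - (if m+6 = n then 1 else 0) + (if m = n then 1 else 0)))"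
    by (simp add: IE_sum[OF h] IE_smult IE_add[OF h] IE_diff[OF h] IE_UU[OF h])
  also have "\<dots> = (1/8) * (3 * (\<Sum>n\<le>m+3. real (n + 1) * (if m+4 = n then 1 else 0))
       - 3 * (\<Sum>n\<le>m+3. real (n + 1) * (if m+2 = n then 1 else 0))
       - (\<Sum>n\<le>m+3. real (n + 1) * (if m+6 = n then 1 else 0))
       + (\<Sum>n\<le>m+3. real (n + 1) * (if m = n then 1 else 0)))"
    using lin4[of "\<lambda>n. real (n + 1)" "1/8" "\<lambda>n. if m+4 = n then 1 else 0" "\<lambda>n. if m+2 = n then 1 else 0"
      "\<lambda>n. if m+6 = n then 1 else 0" "\<lambda>n. if m = n then 1 else 0" "{..m+3}"] by (simp add: mult.assoc)
  also have "\<dots> = - (real m + 4) / 4"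
    unfolding sum_delta_le by simp
  finally show ?thesis .
qed


declare Up.simps(3)[simp del]

lemma sin_triple: fixes x :: real shows "sin (3 * x) = 3 * sin x - 4 * sin x ^ 3"
proof -
  have "sin (3 * x) = sin (2 * x + x)" by (rule arg_cong[where f=sin]) simp
  also have "\<dots> = 2 * sin x * cos x * cos x + (1 - 2 * sin x ^ 2) * sin x"
    by (simp only: sin_add sin_double cos_double_sin)
  also have "\<dots> = 2 * sin x * (cos x * cos x) + (1 - 2 * sin x ^ 2) * sin x" by (simp add: mult.assoc)
  also have "\<dots> = 2 * sin x * (1 - sin x * sin x) + (1 - 2 * sin x ^ 2) * sin x"
  proof -
    have cc: "cos x * cos x = 1 - sin x * sin x" using sin_cos_squared_add3[of x] by linarith
    show ?thesis by (simp only: cc)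
  qed
  also have "\<dots> = 3 * sin x - 4 * sin x ^ 3"
    by (simp add: power2_eq_square power3_eq_cube algebra_simps)
  finally show ?thesis .
qed

lemma phiP_mul_sin: "poly (phiP m) (cos \<theta>) * sin \<theta> = sin \<theta> ^ 3 * cos (real (m+4) * \<theta>)"
proof -
  define x where "x = real (m+4) * \<theta>"
  have a: "real (Suc (m+4)) * \<theta> = x + \<theta>" "real (Suc (m+2)) * \<theta> = x - \<theta>"
     "real (Suc (m+6)) * \<theta> = x + 3 * \<theta>" "real (Suc m) * \<theta> = x - 3 * \<theta>"
    by (simp_all add: x_def algebra_simps)
  have "poly (phiP m) (cos \<theta>) * sin \<theta> = (1/8) * (3 * (poly (Up (m+4)) (cos \<theta>) * sin \<theta>)
     - 3 * (poly (Up (m+2)) (cos \<theta>) * sin \<theta>) - poly (Up (m+6)) (cos \<theta>) * sin \<theta> + poly (Up m) (cos \<theta>) * sin \<theta>)"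
    unfolding phiP_def by (simp add: algebra_simps)
  also have "\<dots> = (1/8) * (3 * sin (x + \<theta>) - 3 * sin (x - \<theta>) - sin (x + 3 * \<theta>) + sin (x - 3 * \<theta>))"
    unfolding U_cos a ..
  also have "\<dots> = cos x * (3 * sin \<theta> - sin (3 * \<theta>)) / 4"
    unfolding sin_add sin_diff by (simp add: algebra_simps)
  also have "\<dots> = sin \<theta> ^ 3 * cos x" unfolding sin_triple by simp
  finally show ?thesis by (simp add: x_def)
qed

lemma phiP_one: "poly (phiP m) 1 = 0" and phiP_mone: "poly (phiP m) (-1) = 0"
  by (simp_all add: phiP_def U_one U_mone power_add algebra_simps)

lemma phiP_trig: "poly (phiP m) (cos \<theta>) = sin \<theta> ^ 2 * cos (real (m+4) * \<theta>)"
proof (cases "sin \<theta> = 0")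
  case True
  then have "cos \<theta> ^ 2 = 1" using sin_squared_eq[of \<theta>] by simp
  then have "cos \<theta> = 1 \<or> cos \<theta> = -1" by (simp add: power2_eq_1_iff)
  then show ?thesis using True phiP_one phiP_mone by auto
next
  case False
  then show ?thesis using phiP_mul_sin[of m \<theta>]
    by (simp add: power3_eq_cube power2_eq_square field_simps)
qed

lemma phiP_bound: "\<bar>t\<bar> \<le> 1 \<Longrightarrow> \<bar>poly (phiP m) t\<bar> \<le> 1"
proof -
  assume t: "\<bar>t\<bar> \<le> 1"
  then have "t = cos (arccos t)" by (simp add: cos_arccos_abs)
  then have "poly (phiP m) t = sin (arccos t) ^ 2 * cos (real (m+4) * arccos t)" using phiP_trig by metis
  also have "\<bar>\<dots>\<bar> \<le> 1 * 1" unfolding abs_mult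
    by (intro mult_mono) (simp_all add: abs_square_le_1 abs_sin_le_one abs_cos_le_one)
  finally show ?thesis by simp
qed

lemma lip_theta:
  fixes a b M :: real
  assumes ab: "0 \<le> a" "a < b" "b \<le> pi" and M: "M \<ge> 0"
  defines "F \<equiv> \<lambda>\<theta>. sin \<theta> ^ 2 * cos (M * \<theta>)"
  shows "\<bar>F b - F a\<bar> \<le> (M + 2) * \<bar>cos b - cos a\<bar>"
proof -
  define Q where "Q c = 2 * cos c * cos (M * c) - M * sin c * sin (M * c)" for c
  have dF: "DERIV F z :> (sin z * Q z)" for z
  proof -
    have "DERIV F z :> (2 * sin z * cos z * cos (M * z) + sin z ^ 2 * (- sin (M * z) * M))"
      unfolding F_def by (auto intro!: derivative_eq_intros simp: power2_eq_square)
    then show ?thesis by (simp add: Q_def power2_eq_square algebra_simps)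
  qed
  obtain c where c: "a < c" "c < b" "(F b - F a) * (- sin c) = (cos b - cos a) * (sin c * Q c)"
    using GMVT'[OF ab(2), of F cos "\<lambda>z. - sin z" "\<lambda>z. sin z * Q z"] dF
    by (auto simp: F_def intro!: continuous_intros DERIV_cos)
  have sc: "sin c > 0" using c ab by (intro sin_gt_zero) simp_all
  have "(F b - F a + (cos b - cos a) * Q c) * (- sin c) = 0" using c(3) by (simp add: algebra_simps)
  then have "F b - F a + (cos b - cos a) * Q c = 0" using sc by simp
  then have "F b - F a = - (cos b - cos a) * Q c" by (simp add: algebra_simps eq_neg_iff_add_eq_0)
  then have "\<bar>F b - F a\<bar> = \<bar>cos b - cos a\<bar> * \<bar>Q c\<bar>" by (simp add: abs_mult abs_minus_commute)
  also have "\<bar>Q c\<bar> \<le> 2 + M"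
  proof -
    have "\<bar>Q c\<bar> \<le> \<bar>2 * cos c * cos (M * c)\<bar> + \<bar>M * sin c * sin (M * c)\<bar>" unfolding Q_def by (rule abs_triangle_ineq4)
    also have "\<bar>2 * cos c * cos (M * c)\<bar> \<le> 2" unfolding abs_mult
      using abs_cos_le_one[of c] abs_cos_le_one[of "M * c"] by (simp add: mult_le_one)
    also have "\<bar>M * sin c * sin (M * c)\<bar> \<le> M"
    proof -
      have "\<bar>sin c\<bar> * \<bar>sin (M * c)\<bar> \<le> 1" by (rule mult_le_one) (simp_all add: abs_sin_le_one)
      then have "M * (\<bar>sin c\<bar> * \<bar>sin (M * c)\<bar>) \<le> M" using M by (rule mult_left_le)
      then show ?thesis using M by (simp add: abs_mult mult.assoc)
    qed
    finally show ?thesis by simp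
  qed
  then have "\<bar>cos b - cos a\<bar> * \<bar>Q c\<bar> \<le> \<bar>cos b - cos a\<bar> * (M + 2)" by (intro mult_left_mono) simp_all
  finally show ?thesis by (simp add: mult.commute)
qed

lemma phiP_lip:
  assumes "\<bar>s\<bar> \<le> 1" "\<bar>t\<bar> \<le> 1"
  shows "\<bar>poly (phiP m) s - poly (phiP m) t\<bar> \<le> (real m + 6) * \<bar>s - t\<bar>"
proof -
  define F where "F \<theta> = sin \<theta> ^ 2 * cos (real (m+4) * \<theta>)" for \<theta>
  have P: "poly (phiP m) u = F (arccos u)" if "\<bar>u\<bar> \<le> 1" for u
    using phiP_trig[of m "arccos u"] that by (simp add: cos_arccos_abs F_def)
  have gen: "\<bar>F b - F a\<bar> \<le> (real m + 6) * \<bar>cos b - cos a\<bar>" if "0 \<le> a" "a \<le> b" "b \<le> pi" for a b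
  proof (cases "a = b")
    case True then show ?thesis by simp
  next
    case False
    then have "\<bar>F b - F a\<bar> \<le> (real (m+4) + 2) * \<bar>cos b - cos a\<bar>" unfolding F_def
      using that by (intro lip_theta) simp_all
    then show ?thesis by (simp add: add.commute)
  qed
  define a b where "a = arccos s" and "b = arccos t"
  have ab: "0 \<le> a" "a \<le> pi" "0 \<le> b" "b \<le> pi" "cos a = s" "cos b = t"
    using assms by (auto simp: a_def b_def arccos_lbound arccos_ubound cos_arccos_abs)
  have "\<bar>F a - F b\<bar> \<le> (real m + 6) * \<bar>cos a - cos b\<bar>"
  proof (cases "a \<le> b")
    case True then show ?thesis using gen[of a b] ab by (simp add: abs_minus_commute)
  next
    case False then show ?thesis using gen[of b a] ab by simp
  qed
  then show ?thesis using P assms ab by (simp add: a_def b_def)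
qed

lemma holder_comb:
  fixes x L \<delta> \<alpha> :: real
  assumes "0 < \<alpha>" "\<alpha> \<le> 1" "L \<ge> 1" "\<delta> \<ge> 0" "x \<le> 2" "x \<le> L * \<delta>"
  shows "x \<le> 2 * L powr \<alpha> * \<delta> powr \<alpha>"
proof -
  have e: "L powr \<alpha> * \<delta> powr \<alpha> = (L * \<delta>) powr \<alpha>" using assms by (simp add: powr_mult)
  show ?thesis
  proof (cases "L * \<delta> \<ge> 1")
    case True
    then have "1 \<le> (L * \<delta>) powr \<alpha>" using assms by (intro ge_one_powr_ge_zero) simp_all
    then show ?thesis using assms e by (simp add: mult.assoc)
  next
    case False
    have p0: "0 \<le> L * \<delta>" using assms by simp
    have "L * \<delta> = (L * \<delta>) powr 1" using p0 by (auto simp: abs_of_nonneg)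
    also have "\<dots> \<le> (L * \<delta>) powr \<alpha>" using False p0 assms by (intro powr_mono') simp_all
    finally have "x \<le> (L * \<delta>) powr \<alpha>" using assms by simp
    then have "x \<le> 2 * (L * \<delta>) powr \<alpha>" using powr_ge_zero[of "L * \<delta>" \<alpha>] by linarith
    then show ?thesis using e by (simp add: mult.assoc)
  qed
qed


declare Up.simps(3)[simp del]

lemma ct_ct_mult: "x \<in> SU2 \<Longrightarrow> conj_transpose x ** (x ** z) = z"
  by (simp add: matrix_mul_assoc ct_mult_SU2 matrix_mul_lid)

lemma X1_ct: "X1 (conj_transpose y) = X1 y"
  by (simp add: X1_def)

lemma abs_sin_mult: "\<bar>sin (real (Suc n) * \<theta>)\<bar> \<le> real (Suc n) * \<bar>sin \<theta>\<bar>"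
proof (induction n)
  case 0 then show ?case by simp
next
  case (Suc n)
  have e: "real (Suc (Suc n)) * \<theta> = real (Suc n) * \<theta> + \<theta>" by (simp add: algebra_simps)
  have "\<bar>sin (real (Suc (Suc n)) * \<theta>)\<bar> \<le> \<bar>sin (real (Suc n) * \<theta>)\<bar> * \<bar>cos \<theta>\<bar> + \<bar>cos (real (Suc n) * \<theta>)\<bar> * \<bar>sin \<theta>\<bar>"
    unfolding e sin_add by (metis abs_mult abs_triangle_ineq)
  also have "\<dots> \<le> real (Suc n) * \<bar>sin \<theta>\<bar> * 1 + 1 * \<bar>sin \<theta>\<bar>"
    by (intro add_mono mult_mono Suc) (simp_all add: abs_cos_le_one)
  finally show ?case by (simp add: algebra_simps)
qed

lemma Up_bound: "\<bar>t\<bar> \<le> 1 \<Longrightarrow> \<bar>poly (Up n) t\<bar> \<le> real n + 1"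
proof -
  assume t: "\<bar>t\<bar> \<le> 1"
  define \<theta> where "\<theta> = arccos t"
  have ct: "cos \<theta> = t" using t by (simp add: \<theta>_def cos_arccos_abs)
  show ?thesis
  proof (cases "sin \<theta> = 0")
    case True
    then have "cos \<theta> ^ 2 = 1" using sin_squared_eq[of \<theta>] by simp
    then have "t = 1 \<or> t = -1" using ct by (simp add: power2_eq_1_iff)
    then show ?thesis by (auto simp: U_one U_mone abs_mult)
  next
    case False
    have "\<bar>poly (Up n) t\<bar> * \<bar>sin \<theta>\<bar> = \<bar>sin (real (Suc n) * \<theta>)\<bar>"
      using U_cos[of n \<theta>] ct by (simp add: abs_mult[symmetric])
    also have "\<dots> \<le> (real n + 1) * \<bar>sin \<theta>\<bar>" using abs_sin_mult[of n \<theta>] by (simp add: add.commute)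
    finally show ?thesis using False by simp
  qed
qed

definition KB :: "nat \<Rightarrow> real" where "KB N = (\<Sum>n\<le>N. (real n + 1)^2)"

lemma KB_ge1: "KB N \<ge> 1"
proof -
  have "(real 0 + 1)^2 \<le> KB N" unfolding KB_def
    by (rule member_le_sum) simp_all
  then show ?thesis by simp
qed

lemma KB_mono: "N \<le> N' \<Longrightarrow> KB N \<le> KB N'"
  unfolding KB_def by (rule sum_mono2) auto

lemma KN_bound: "\<bar>t\<bar> \<le> 1 \<Longrightarrow> \<bar>poly (KN N) t\<bar> \<le> KB N"
proof -
  assume t: "\<bar>t\<bar> \<le> 1"
  have "\<bar>poly (KN N) t\<bar> = \<bar>\<Sum>n\<le>N. real (n + 1) * poly (Up n) t\<bar>" by (simp add: KN_def poly_sum)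
  also have "\<dots> \<le> (\<Sum>n\<le>N. \<bar>real (n + 1) * poly (Up n) t\<bar>)" by (rule sum_abs)
  also have "\<dots> \<le> (\<Sum>n\<le>N. (real n + 1)^2)"
  proof (rule sum_mono)
    fix n
    have "\<bar>real (n + 1) * poly (Up n) t\<bar> = (real n + 1) * \<bar>poly (Up n) t\<bar>" by (simp add: abs_mult)
    also have "\<dots> \<le> (real n + 1) * (real n + 1)" using Up_bound[OF t, of n] by (intro mult_left_mono) simp_all
    finally show "\<bar>real (n + 1) * poly (Up n) t\<bar> \<le> (real n + 1)^2" by (simp add: power2_eq_square)
  qed
  finally show ?thesis by (simp add: KB_def)
qed

lemma S_eq:
  assumes h: "is_haar_SU2 \<mu>"
  shows "fourier_partial_sum \<mu> N g x = (\<integral>y. g (x ** conj_transpose y) * poly (KN N) (X1 y) \<partial>\<mu>)"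
  unfolding fourier_partial_sum_def
proof (rule Bochner_Integration.integral_cong[OF refl])
  fix y assume "y \<in> space \<mu>"
  then have y: "y \<in> SU2" using haar_space[OF h] by simp
  show "g (x ** matrix_inv y) * dirichlet_kernel N y = g (x ** conj_transpose y) * poly (KN N) (X1 y)"
    by (simp add: matrix_inv_SU2[OF y] dirichlet_KN[OF y])
qed

lemma int_bound:
  fixes F :: "cmat2 \<Rightarrow> real"
  assumes h: "is_haar_SU2 \<mu>" and c: "continuous_on SU2 F" and b: "\<And>y. y \<in> SU2 \<Longrightarrow> \<bar>F y\<bar> \<le> B"
  shows "\<bar>\<integral>y. F y \<partial>\<mu>\<bar> \<le> B"
proof -
  have "\<bar>\<integral>y. F y \<partial>\<mu>\<bar> \<le> (\<integral>y. B \<partial>\<mu>)"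
    by (rule integral_abs_bound_integral)
       (use haar_integrable[OF h c] haar_integrable[OF h continuous_on_const] b haar_space[OF h] in auto)
  also have "(\<integral>y. B \<partial>\<mu>) = B"
  proof -
    have "emeasure \<mu> (space \<mu>) = 1" using h unfolding is_haar_SU2_def by blast
    then have "measure \<mu> (space \<mu>) = 1" by (simp add: measure_def)
    then show ?thesis by simp
  qed
  finally show ?thesis .
qed


declare Up.simps(3)[simp del]

definition hol :: "real \<Rightarrow> cmat2 \<Rightarrow> nat \<Rightarrow> cmat2 \<Rightarrow> real" where
  "hol \<alpha> x m z = poly (phiP m) (X1 (conj_transpose x ** z)) / (2 * (real m + 6) powr \<alpha>)"

lemma cX1c[continuous_intros]: "continuous_on S f \<Longrightarrow> continuous_on S (\<lambda>z. X1 (f z))"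
  unfolding X1_def by (intro continuous_intros)
lemma cmulc[continuous_intros]: "continuous_on S f \<Longrightarrow> continuous_on S (\<lambda>z. (A::cmat2) ** f z)"
  unfolding matrix_matrix_mult_def by (intro continuous_intros)
lemma cctc[continuous_intros]: "continuous_on S f \<Longrightarrow> continuous_on S (\<lambda>z. conj_transpose (f z))"
  unfolding conj_transpose_def by (intro continuous_intros)

lemma hol_cont[continuous_intros]: "continuous_on S f \<Longrightarrow> continuous_on S (\<lambda>z. hol \<alpha> x m (f z))"
proof -
  assume f: "continuous_on S f"
  have "(real m + 6) powr \<alpha> > 0" by simp
  then show ?thesis unfolding hol_def using f by (intro continuous_intros) auto
qed

lemma hol_denom: "0 < \<alpha> \<Longrightarrow> 2 \<le> 2 * (real m + 6) powr \<alpha>"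
  using ge_one_powr_ge_zero[of "real m + 6" \<alpha>] by simp

lemma hol_bound:
  assumes "x \<in> SU2" "z \<in> SU2" "0 < \<alpha>"
  shows "\<bar>hol \<alpha> x m z\<bar> \<le> 1/2"
proof -
  have "\<bar>X1 (conj_transpose x ** z)\<bar> \<le> 1" by (intro X1_bound SU2_mult ct_SU2 assms)
  then have p: "\<bar>poly (phiP m) (X1 (conj_transpose x ** z))\<bar> \<le> 1" by (rule phiP_bound)
  have d: "2 \<le> 2 * (real m + 6) powr \<alpha>" using hol_denom[OF assms(3)] .
  have cpos: "0 < 2 * (real m + 6) powr \<alpha>" using d by linarith
  have "\<bar>hol \<alpha> x m z\<bar> = \<bar>poly (phiP m) (X1 (conj_transpose x ** z))\<bar> / (2 * (real m + 6) powr \<alpha>)"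
    unfolding hol_def abs_divide abs_of_pos[OF cpos] ..
  also have "\<dots> \<le> 1 / 2" by (rule frac_le[OF _ p _ d]) simp_all
  finally show ?thesis .
qed

lemma hol_lip:
  assumes "x \<in> SU2" "a \<in> SU2" "b \<in> SU2" "0 < \<alpha>" "\<alpha> \<le> 1"
  shows "\<bar>hol \<alpha> x m a - hol \<alpha> x m b\<bar> \<le> su2_dist a b powr \<alpha>"
proof -
  define s t where "s = X1 (conj_transpose x ** a)" and "t = X1 (conj_transpose x ** b)"
  define C where "C = 2 * (real m + 6) powr \<alpha>"
  have C: "C \<ge> 2" using hol_denom[OF assms(4)] by (simp add: C_def)
  have st: "\<bar>s\<bar> \<le> 1" "\<bar>t\<bar> \<le> 1" unfolding s_def t_def by (intro X1_bound SU2_mult ct_SU2 assms)+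
  define D where "D = \<bar>poly (phiP m) s - poly (phiP m) t\<bar>"
  have D2: "D \<le> 2" unfolding D_def using phiP_bound[OF st(1), of m] phiP_bound[OF st(2), of m] by linarith
  have DL: "D \<le> (real m + 6) * \<bar>s - t\<bar>" unfolding D_def by (rule phiP_lip[OF st])
  have "D \<le> 2 * (real m + 6) powr \<alpha> * \<bar>s - t\<bar> powr \<alpha>"
    by (rule holder_comb[OF assms(4,5) _ _ D2 DL]) simp_all
  also have "\<dots> \<le> 2 * (real m + 6) powr \<alpha> * su2_dist a b powr \<alpha>"
  proof (intro mult_left_mono powr_mono2)
    show "\<bar>s - t\<bar> \<le> su2_dist a b" unfolding s_def t_def by (rule X1_lip[OF assms(1-3)])
  qed (use assms in simp_all)
  finally have "D \<le> C * su2_dist a b powr \<alpha>" by (simp add: C_def)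
  moreover have cpos: "0 < C" using C by linarith
  moreover have "\<bar>hol \<alpha> x m a - hol \<alpha> x m b\<bar> = D / C"
    unfolding hol_def D_def C_def[symmetric] s_def[symmetric] t_def[symmetric] diff_divide_distrib[symmetric]
      abs_divide abs_of_pos[OF cpos] ..
  ultimately show ?thesis by (simp add: pos_divide_le_eq mult.commute)
qed

lemma hol_S:
  assumes h: "is_haar_SU2 \<mu>" and x: "x \<in> SU2"
  shows "fourier_partial_sum \<mu> (m+3) (hol \<alpha> x m) x = - (real m + 4) / (8 * (real m + 6) powr \<alpha>)"
proof -
  define C where "C = 2 * (real m + 6) powr \<alpha>"
  have "fourier_partial_sum \<mu> (m+3) (hol \<alpha> x m) x = (\<integral>y. hol \<alpha> x m (x ** conj_transpose y) * poly (KN (m+3)) (X1 y) \<partial>\<mu>)"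
    by (rule S_eq[OF h])
  also have "\<dots> = (\<integral>y. poly (phiP m * KN (m+3)) (X1 y) / C \<partial>\<mu>)"
    by (rule Bochner_Integration.integral_cong[OF refl]) (simp add: hol_def ct_ct_mult[OF x] X1_ct C_def)
  also have "\<dots> = IE \<mu> (phiP m * KN (m+3)) / C" by (simp add: IE_def)
  also have "\<dots> = - (real m + 4) / (8 * (real m + 6) powr \<alpha>)" by (simp add: key_integral[OF h] C_def)
  finally show ?thesis .
qed

lemma hol_S_bound:
  assumes h: "is_haar_SU2 \<mu>" and x: "x \<in> SU2" and p: "p \<in> SU2" and a: "0 < \<alpha>"
  shows "\<bar>fourier_partial_sum \<mu> N (hol \<alpha> x m) p\<bar> \<le> KB N / 2"
  unfolding S_eq[OF h]
proof (rule int_bound[OF h])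
  show "continuous_on SU2 (\<lambda>y. hol \<alpha> x m (p ** conj_transpose y) * poly (KN N) (X1 y))"
    by (intro continuous_intros)
  fix y assume y: "y \<in> SU2"
  have "\<bar>hol \<alpha> x m (p ** conj_transpose y) * poly (KN N) (X1 y)\<bar> \<le> 1/2 * KB N"
    unfolding abs_mult
    by (intro mult_mono hol_bound x SU2_mult p ct_SU2 y a KN_bound X1_bound) simp_all
  then show "\<bar>hol \<alpha> x m (p ** conj_transpose y) * poly (KN N) (X1 y)\<bar> \<le> KB N / 2" by simp
qed


declare Up.simps(3)[simp del]

locale ser =
  fixes \<alpha> :: real and \<mu> :: "cmat2 measure" and c \<epsilon> :: "nat \<Rightarrow> real" and pts :: "nat \<Rightarrow> cmat2" and ms :: "nat \<Rightarrow> nat"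
  assumes a: "0 < \<alpha>" "\<alpha> < 1" and h: "is_haar_SU2 \<mu>" and pts: "\<And>i. pts i \<in> SU2"
    and c: "\<And>i. \<bar>c i\<bar> \<le> 1" and eps: "\<And>i. 0 \<le> \<epsilon> i" and seps: "summable \<epsilon>"
begin

definition ff :: "cmat2 \<Rightarrow> real" where "ff z = (\<Sum>i. c i * \<epsilon> i * hol \<alpha> (pts i) (ms i) z)"

lemma term_bound: "z \<in> SU2 \<Longrightarrow> \<bar>c i * \<epsilon> i * hol \<alpha> (pts i) (ms i) z\<bar> \<le> \<epsilon> i"
proof -
  assume z: "z \<in> SU2"
  have "\<bar>c i * \<epsilon> i * hol \<alpha> (pts i) (ms i) z\<bar> = \<bar>c i\<bar> * \<epsilon> i * \<bar>hol \<alpha> (pts i) (ms i) z\<bar>"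
    using eps[of i] by (simp add: abs_mult)
  also have "\<dots> \<le> 1 * \<epsilon> i * 1"
    using hol_bound[OF pts z a(1), of i "ms i"] c[of i] eps[of i] by (intro mult_mono) simp_all
  finally show ?thesis by simp
qed

lemma summable_term: "z \<in> SU2 \<Longrightarrow> summable (\<lambda>i. c i * \<epsilon> i * hol \<alpha> (pts i) (ms i) z)"
  by (rule summable_comparison_test[OF _ seps]) (use term_bound in auto)

lemma ff_lip:
  assumes "x \<in> SU2" "y \<in> SU2"
  shows "\<bar>ff x - ff y\<bar> \<le> suminf \<epsilon> * su2_dist x y powr \<alpha>"
proof -
  have "ff x - ff y = (\<Sum>i. c i * \<epsilon> i * hol \<alpha> (pts i) (ms i) x - c i * \<epsilon> i * hol \<alpha> (pts i) (ms i) y)"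
    unfolding ff_def by (rule suminf_diff) (intro summable_term assms)+
  also have "\<bar>\<dots>\<bar> \<le> (\<Sum>i. \<epsilon> i * su2_dist x y powr \<alpha>)"
  proof (rule norm_suminf_le[where f="\<lambda>i. c i * \<epsilon> i * hol \<alpha> (pts i) (ms i) x - c i * \<epsilon> i * hol \<alpha> (pts i) (ms i) y", unfolded real_norm_def])
    fix i
    have "\<bar>c i * \<epsilon> i * hol \<alpha> (pts i) (ms i) x - c i * \<epsilon> i * hol \<alpha> (pts i) (ms i) y\<bar>
        = \<bar>c i\<bar> * \<epsilon> i * \<bar>hol \<alpha> (pts i) (ms i) x - hol \<alpha> (pts i) (ms i) y\<bar>"
    proof -
      have "c i * \<epsilon> i * hol \<alpha> (pts i) (ms i) x - c i * \<epsilon> i * hol \<alpha> (pts i) (ms i) y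
          = c i * \<epsilon> i * (hol \<alpha> (pts i) (ms i) x - hol \<alpha> (pts i) (ms i) y)" by (simp add: algebra_simps)
      then show ?thesis using eps[of i] by (simp add: abs_mult)
    qed
    also have "\<dots> \<le> 1 * \<epsilon> i * su2_dist x y powr \<alpha>"
      using hol_lip[OF pts[of i] assms a(1) less_imp_le[OF a(2)], of "ms i"] c[of i] eps[of i] by (intro mult_mono) simp_all
    finally show "\<bar>c i * \<epsilon> i * hol \<alpha> (pts i) (ms i) x - c i * \<epsilon> i * hol \<alpha> (pts i) (ms i) y\<bar> \<le> \<epsilon> i * su2_dist x y powr \<alpha>"
      by simp
  next
    show "summable (\<lambda>i. \<epsilon> i * su2_dist x y powr \<alpha>)" by (rule summable_mult2[OF seps])
  qed
  also have "\<dots> = suminf \<epsilon> * su2_dist x y powr \<alpha>" by (rule suminf_mult2[OF seps, symmetric])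
  finally show ?thesis .
qed

lemma ff_S:
  assumes p: "p \<in> SU2"
  shows "fourier_partial_sum \<mu> N ff p = (\<Sum>i. c i * \<epsilon> i * fourier_partial_sum \<mu> N (hol \<alpha> (pts i) (ms i)) p)"
    and "summable (\<lambda>i. c i * \<epsilon> i * fourier_partial_sum \<mu> N (hol \<alpha> (pts i) (ms i)) p)"
proof -
  define F where "F i y = c i * \<epsilon> i * (hol \<alpha> (pts i) (ms i) (p ** conj_transpose y) * poly (KN N) (X1 y))" for i y
  have sp: "space \<mu> = SU2" by (rule haar_space[OF h])
  have Fc: "continuous_on SU2 (F i)" for i unfolding F_def by (intro continuous_intros)
  have Fb: "\<bar>F i y\<bar> \<le> \<epsilon> i * KB N" if y: "y \<in> SU2" for i y
  proof -
    have py: "p ** conj_transpose y \<in> SU2" by (intro SU2_mult p ct_SU2 y)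
    have "\<bar>F i y\<bar> = \<bar>c i * \<epsilon> i * hol \<alpha> (pts i) (ms i) (p ** conj_transpose y)\<bar> * \<bar>poly (KN N) (X1 y)\<bar>"
      unfolding F_def by (simp add: abs_mult)
    also have "\<dots> \<le> \<epsilon> i * KB N"
      using term_bound[OF py, of i] KN_bound[OF X1_bound[OF y], of N] eps[of i] by (intro mult_mono) simp_all
    finally show ?thesis .
  qed
  have sKB: "summable (\<lambda>i. \<epsilon> i * KB N)" by (rule summable_mult2[OF seps])
  have intF: "integrable \<mu> (F i)" for i by (rule haar_integrable[OF h Fc])
  have AEs: "AE y in \<mu>. summable (\<lambda>i. norm (F i y))"
  proof (rule AE_I2)
    fix y assume "y \<in> space \<mu>"
    then have y: "y \<in> SU2" using sp by simp
    show "summable (\<lambda>i. norm (F i y))" by (rule summable_comparison_test[OF _ sKB]) (use Fb[OF y] in auto)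
  qed
  have sI: "summable (\<lambda>i. (\<integral>y. norm (F i y) \<partial>\<mu>))"
  proof (rule summable_comparison_test[OF _ sKB])
    show "\<exists>N0. \<forall>n\<ge>N0. norm (\<integral>y. norm (F n y) \<partial>\<mu>) \<le> \<epsilon> n * KB N"
    proof (intro exI allI impI)
      fix n
      have "\<bar>\<integral>y. \<bar>F n y\<bar> \<partial>\<mu>\<bar> \<le> \<epsilon> n * KB N"
        by (rule int_bound[OF h]) (use Fb in \<open>auto intro!: continuous_intros Fc\<close>)
      then show "norm (\<integral>y. norm (F n y) \<partial>\<mu>) \<le> \<epsilon> n * KB N" by simp
    qed
  qed
  have eq1: "fourier_partial_sum \<mu> N ff p = (\<integral>y. (\<Sum>i. F i y) \<partial>\<mu>)"
    unfolding S_eq[OF h]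
  proof (rule Bochner_Integration.integral_cong[OF refl])
    fix y assume "y \<in> space \<mu>"
    then have y: "y \<in> SU2" using sp by simp
    have py: "p ** conj_transpose y \<in> SU2" by (intro SU2_mult p ct_SU2 y)
    show "ff (p ** conj_transpose y) * poly (KN N) (X1 y) = (\<Sum>i. F i y)"
      unfolding ff_def F_def using suminf_mult2[OF summable_term[OF py], of "poly (KN N) (X1 y)"]
      by (simp add: mult.assoc)
  qed
  have eq2: "integral\<^sup>L \<mu> (F i) = c i * \<epsilon> i * fourier_partial_sum \<mu> N (hol \<alpha> (pts i) (ms i)) p" for i
    unfolding F_def S_eq[OF h] by simp
  show "fourier_partial_sum \<mu> N ff p = (\<Sum>i. c i * \<epsilon> i * fourier_partial_sum \<mu> N (hol \<alpha> (pts i) (ms i)) p)"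
    unfolding eq1 integral_suminf[OF intF AEs sI] eq2 ..
  show "summable (\<lambda>i. c i * \<epsilon> i * fourier_partial_sum \<mu> N (hol \<alpha> (pts i) (ms i)) p)"
    using summable_integral[OF intF AEs sI] unfolding eq2 .
qed

end


definition need :: "real \<Rightarrow> nat \<Rightarrow> nat \<Rightarrow> nat" where
  "need \<alpha> j P = nat \<lceil>(16 * ((real j + 2) * 2 ^ j * KB P)) powr (1 / (1 - \<alpha>))\<rceil>"

primrec msq :: "real \<Rightarrow> nat \<Rightarrow> nat" where
  "msq \<alpha> 0 = need \<alpha> 0 0"
| "msq \<alpha> (Suc j) = max (msq \<alpha> j) (need \<alpha> (Suc j) (msq \<alpha> j + 3))"

definition prevN :: "real \<Rightarrow> nat \<Rightarrow> nat" where
  "prevN \<alpha> j = (case j of 0 \<Rightarrow> 0 | Suc i \<Rightarrow> msq \<alpha> i + 3)"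

definition eps :: "real \<Rightarrow> nat \<Rightarrow> real" where
  "eps \<alpha> j = (1/2)^j / KB (prevN \<alpha> j)"

lemma msq_need: "need \<alpha> j (prevN \<alpha> j) \<le> msq \<alpha> j"
  by (cases j) (simp_all add: prevN_def)

lemma msq_mono: "i \<le> j \<Longrightarrow> msq \<alpha> i \<le> msq \<alpha> j"
  by (rule lift_Suc_mono_le[of "msq \<alpha>"]) simp_all

lemma prevN_ge: "j < i \<Longrightarrow> msq \<alpha> j + 3 \<le> prevN \<alpha> i"
  by (cases i) (auto simp: prevN_def intro!: msq_mono)

lemma eps_pos: "0 < eps \<alpha> j"
  unfolding eps_def using KB_ge1[of "prevN \<alpha> j"] by simp

lemma eps_le: "eps \<alpha> j \<le> (1/2)^j"
  unfolding eps_def using KB_ge1[of "prevN \<alpha> j"] by (simp add: divide_le_eq_1 field_simps)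

lemma summable_eps: "summable (eps \<alpha>)"
  by (rule summable_comparison_test[of _ "\<lambda>j. (1/2::real)^j"])
     (use eps_le eps_pos in \<open>auto intro!: summable_geometric simp: less_imp_le\<close>)

lemma eps_tail: "j < i \<Longrightarrow> eps \<alpha> i * KB (msq \<alpha> j + 3) \<le> (1/2)^i"
proof -
  assume "j < i"
  then have "KB (msq \<alpha> j + 3) \<le> KB (prevN \<alpha> i)" by (intro KB_mono prevN_ge)
  moreover have "KB (prevN \<alpha> i) > 0" using KB_ge1[of "prevN \<alpha> i"] by simp
  ultimately have "KB (msq \<alpha> j + 3) / KB (prevN \<alpha> i) \<le> 1" by simp
  then have "(1/2)^i * (KB (msq \<alpha> j + 3) / KB (prevN \<alpha> i)) \<le> (1/2)^i * 1"
    by (intro mult_left_mono) simp_all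
  then show ?thesis by (simp add: eps_def)
qed

lemma big:
  assumes a: "0 < \<alpha>" "\<alpha> < 1"
  shows "real j + 2 \<le> eps \<alpha> j * ((real (msq \<alpha> j) + 4) / (8 * (real (msq \<alpha> j) + 6) powr \<alpha>))"
proof -
  define m where "m = msq \<alpha> j"
  define K where "K = KB (prevN \<alpha> j)"
  define T where "T = (real j + 2) * 2 ^ j * K"
  define x where "x = real m + 6"
  have K1: "K \<ge> 1" unfolding K_def by (rule KB_ge1)
  have T0: "T > 0" unfolding T_def using K1 by simp
  have x0: "x > 0" unfolding x_def by simp
  have "(16 * T) powr (1 / (1 - \<alpha>)) \<le> real (need \<alpha> j (prevN \<alpha> j))"
    unfolding need_def T_def K_def by (simp add: real_nat_ceiling_ge)
  also have "\<dots> \<le> real m" unfolding m_def using msq_need by simp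
  also have "\<dots> \<le> x" unfolding x_def by simp
  finally have xb: "(16 * T) powr (1 / (1 - \<alpha>)) \<le> x" .
  have "16 * T = ((16 * T) powr (1 / (1 - \<alpha>))) powr (1 - \<alpha>)"
    using T0 a by (simp add: powr_powr)
  also have "\<dots> \<le> x powr (1 - \<alpha>)" using xb a by (intro powr_mono2) simp_all
  finally have xT: "16 * T \<le> x powr (1 - \<alpha>)" .
  have xa: "x powr (1 - \<alpha>) = x / x powr \<alpha>" using x0 by (simp add: powr_diff)
  have xpos: "x powr \<alpha> > 0" using x0 by simp
  have "x / (16 * x powr \<alpha>) \<le> (real m + 4) / (8 * x powr \<alpha>)"
    using xpos unfolding x_def by (simp add: field_simps)
  moreover have "x powr (1 - \<alpha>) / 16 = x / (16 * x powr \<alpha>)" unfolding xa by simp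
  ultimately have "T \<le> (real m + 4) / (8 * x powr \<alpha>)" using xT by linarith
  then have "eps \<alpha> j * T \<le> eps \<alpha> j * ((real m + 4) / (8 * x powr \<alpha>))"
    using eps_pos[of \<alpha> j] by (intro mult_left_mono) simp_all
  moreover have "eps \<alpha> j * T = real j + 2"
    unfolding eps_def T_def K_def using KB_ge1[of "prevN \<alpha> j"]
    by (simp add: field_simps power_one_over)
  ultimately show ?thesis by (simp add: m_def x_def)
qed

lemma sign_lemma:
  fixes A V e :: real
  assumes e: "0 \<le> e"
  shows "e * \<bar>V\<bar> \<le> \<bar>A + (if 0 \<le> A * V then 1 else -1) * e * V\<bar>"
proof (cases "0 \<le> A * V")
  case True
  then have "(0 \<le> A \<and> 0 \<le> V) \<or> (A \<le> 0 \<and> V \<le> 0)" by (auto simp: zero_le_mult_iff)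
  then show ?thesis
  proof
    assume h: "0 \<le> A \<and> 0 \<le> V"
    then have "0 \<le> e * V" using e by simp
    then show ?thesis using True h by (simp add: abs_of_nonneg)
  next
    assume h: "A \<le> 0 \<and> V \<le> 0"
    then have "e * V \<le> 0" using e by (simp add: mult_nonneg_nonpos)
    then show ?thesis using True h by (simp add: abs_of_nonpos)
  qed
next
  case False
  then have "(0 < A \<and> V < 0) \<or> (A < 0 \<and> 0 < V)" by (auto simp: zero_le_mult_iff)
  then show ?thesis
  proof
    assume h: "0 < A \<and> V < 0"
    then have "e * V \<le> 0" using e by (simp add: mult_nonneg_nonpos)
    then show ?thesis using False h by (simp add: abs_of_nonneg abs_of_neg)
  next
    assume h: "A < 0 \<and> 0 < V"
    then have "0 \<le> e * V" using e by simp
    then show ?thesis using False h by (simp add: abs_of_nonpos abs_of_pos)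
  qed
qed


declare Up.simps(3)[simp del]

definition Aval :: "cmat2 measure \<Rightarrow> real \<Rightarrow> (nat \<Rightarrow> cmat2) \<Rightarrow> (nat \<Rightarrow> real) \<Rightarrow> nat \<Rightarrow> real" where
  "Aval \<mu> \<alpha> pt c j = (\<Sum>i<j. c i * eps \<alpha> i * fourier_partial_sum \<mu> (msq \<alpha> j + 3) (hol \<alpha> (pt i) (msq \<alpha> i)) (pt j))"

definition Vval :: "cmat2 measure \<Rightarrow> real \<Rightarrow> (nat \<Rightarrow> cmat2) \<Rightarrow> nat \<Rightarrow> real" where
  "Vval \<mu> \<alpha> pt j = fourier_partial_sum \<mu> (msq \<alpha> j + 3) (hol \<alpha> (pt j) (msq \<alpha> j)) (pt j)"

primrec csq :: "cmat2 measure \<Rightarrow> real \<Rightarrow> (nat \<Rightarrow> cmat2) \<Rightarrow> nat \<Rightarrow> nat \<Rightarrow> real" where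
  "csq \<mu> \<alpha> pt 0 = (\<lambda>_. 0)"
| "csq \<mu> \<alpha> pt (Suc j) = (csq \<mu> \<alpha> pt j)(j := (if 0 \<le> Aval \<mu> \<alpha> pt (csq \<mu> \<alpha> pt j) j * Vval \<mu> \<alpha> pt j then 1 else -1))"

definition cs :: "cmat2 measure \<Rightarrow> real \<Rightarrow> (nat \<Rightarrow> cmat2) \<Rightarrow> nat \<Rightarrow> real" where
  "cs \<mu> \<alpha> pt j = csq \<mu> \<alpha> pt (Suc j) j"

lemma csq_stable: "i < j \<Longrightarrow> csq \<mu> \<alpha> pt j i = cs \<mu> \<alpha> pt i"
proof (induction j)
  case 0 then show ?case by simp
next
  case (Suc j)
  show ?case
  proof (cases "i = j")
    case True then show ?thesis by (simp add: cs_def)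
  next
    case False
    then have "i < j" using Suc.prems by simp
    then show ?thesis using Suc.IH False by simp
  qed
qed

lemma cs_bound: "\<bar>cs \<mu> \<alpha> pt i\<bar> \<le> 1"
  by (simp add: cs_def)

lemma Aval_cs: "Aval \<mu> \<alpha> pt (csq \<mu> \<alpha> pt j) j = Aval \<mu> \<alpha> pt (cs \<mu> \<alpha> pt) j"
  unfolding Aval_def by (rule sum.cong) (simp_all add: csq_stable)

lemma cs_eq: "cs \<mu> \<alpha> pt j = (if 0 \<le> Aval \<mu> \<alpha> pt (cs \<mu> \<alpha> pt) j * Vval \<mu> \<alpha> pt j then 1 else -1)"
  by (simp add: cs_def Aval_cs)

lemma ser_inst:
  assumes a: "0 < \<alpha>" "\<alpha> < 1" and h: "is_haar_SU2 \<mu>" and pt: "\<And>j. pt j \<in> SU2"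
  shows "ser \<alpha> \<mu> (cs \<mu> \<alpha> pt) (eps \<alpha>) pt"
  by unfold_locales (simp_all add: a h pt cs_bound summable_eps less_imp_le[OF eps_pos])

lemma main_lower:
  assumes a: "0 < \<alpha>" "\<alpha> < 1" and h: "is_haar_SU2 \<mu>" and pt: "\<And>j. pt j \<in> SU2"
  shows "real j + 1 \<le> \<bar>fourier_partial_sum \<mu> (msq \<alpha> j + 3) (ser.ff \<alpha> (cs \<mu> \<alpha> pt) (eps \<alpha>) pt (msq \<alpha>)) (pt j)\<bar>"
proof -
  interpret ser \<alpha> \<mu> "cs \<mu> \<alpha> pt" "eps \<alpha>" pt "msq \<alpha>" by (rule ser_inst[OF a h pt])
  define N where "N = msq \<alpha> j + 3"
  define a where "a = (\<lambda>i. cs \<mu> \<alpha> pt i * eps \<alpha> i * fourier_partial_sum \<mu> N (hol \<alpha> (pt i) (msq \<alpha> i)) (pt j))"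
  have S: "fourier_partial_sum \<mu> N ff (pt j) = suminf a" and sa: "summable a"
    using ff_S[OF pt[of j], of N] by (simp_all add: a_def)
  have split: "suminf a = (\<Sum>n. a (n + Suc j)) + (\<Sum>i<Suc j. a i)"
    by (rule suminf_split_initial_segment[OF sa])
  define A where "A = Aval \<mu> \<alpha> pt (cs \<mu> \<alpha> pt) j"
  define V where "V = Vval \<mu> \<alpha> pt j"
  have head: "(\<Sum>i<Suc j. a i) = A + (if 0 \<le> A * V then 1 else -1) * eps \<alpha> j * V"
    using cs_eq[of \<mu> \<alpha> pt j] by (simp add: a_def A_def V_def Aval_def Vval_def N_def)
  have absV: "\<bar>V\<bar> = (real (msq \<alpha> j) + 4) / (8 * (real (msq \<alpha> j) + 6) powr \<alpha>)"
    unfolding V_def Vval_def hol_S[OF h pt] by simp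
  have hb: "real j + 2 \<le> \<bar>\<Sum>i<Suc j. a i\<bar>"
  proof -
    have "real j + 2 \<le> eps \<alpha> j * \<bar>V\<bar>" unfolding absV by (rule big[OF a])
    also have "\<dots> \<le> \<bar>\<Sum>i<Suc j. a i\<bar>" unfolding head
      by (rule sign_lemma) (use eps_pos[of \<alpha> j] in simp)
    finally show ?thesis .
  qed
  have tb: "\<bar>\<Sum>n. a (n + Suc j)\<bar> \<le> 1"
  proof -
    have "\<bar>\<Sum>n. a (n + Suc j)\<bar> \<le> (\<Sum>n. (1/2::real) ^ Suc n)"
    proof (rule norm_suminf_le[where f="\<lambda>n. a (n + Suc j)", unfolded real_norm_def])
      fix n
      have "\<bar>a (n + Suc j)\<bar> = \<bar>cs \<mu> \<alpha> pt (n + Suc j)\<bar> * eps \<alpha> (n + Suc j) *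
          \<bar>fourier_partial_sum \<mu> N (hol \<alpha> (pt (n + Suc j)) (msq \<alpha> (n + Suc j))) (pt j)\<bar>"
        unfolding a_def using eps_pos[of \<alpha> "n + Suc j"] by (simp add: abs_mult)
      also have "\<dots> \<le> 1 * eps \<alpha> (n + Suc j) * (KB N / 2)"
        using cs_bound eps_pos[of \<alpha> "n + Suc j"] hol_S_bound[OF h pt pt a(1)]
        by (intro mult_mono) (simp_all add: less_imp_le)
      also have "\<dots> \<le> eps \<alpha> (n + Suc j) * KB N"
        using eps_pos[of \<alpha> "n + Suc j"] KB_ge1[of N] by simp
      also have "\<dots> \<le> (1/2) ^ (n + Suc j)" unfolding N_def by (rule eps_tail) simp
      also have "\<dots> \<le> (1/2) ^ Suc n" by (rule power_decreasing) simp_all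
      finally show "\<bar>a (n + Suc j)\<bar> \<le> (1/2) ^ Suc n" .
    next
      show "summable (\<lambda>n. (1/2::real) ^ Suc n)" using power_half_series by (rule sums_summable)
    qed
    also have "(\<Sum>n. (1/2::real) ^ Suc n) = 1" using power_half_series by (rule sums_unique[symmetric])
    finally show ?thesis .
  qed
  have "real j + 1 \<le> \<bar>(\<Sum>n. a (n + Suc j)) + (\<Sum>i<Suc j. a i)\<bar>" using hb tb by linarith
  then show ?thesis unfolding N_def[symmetric] S split .
qed

theorem theorem1:
  fixes \<alpha> :: real and X :: "cmat2 set" and \<mu> :: "cmat2 measure"
  assumes "0 < \<alpha>" "\<alpha> < 1"
    and "countable X" "X \<subseteq> SU2"
    and "is_haar_SU2 \<mu>"
  shows "\<exists>f. Lip_alpha \<alpha> f \<and>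
    (\<forall>x\<in>X. \<not> bdd_above ((\<lambda>N. \<bar>fourier_partial_sum \<mu> N f x\<bar>) ` {1..}))"
proof (cases "X = {}")
  case True
  show ?thesis by (rule exI[of _ "\<lambda>_. 0"]) (auto simp: Lip_alpha_def True)
next
  case False
  define e where "e = from_nat_into X"
  have eX: "e i \<in> X" for i unfolding e_def by (rule from_nat_into[OF False])
  define pt where "pt j = e (fst (prod_decode j))" for j
  have pt: "pt j \<in> SU2" for j using eX assms(4) unfolding pt_def by blast
  interpret ser \<alpha> \<mu> "cs \<mu> \<alpha> pt" "eps \<alpha>" pt "msq \<alpha>" by (rule ser_inst[OF assms(1,2,5) pt])
  show ?thesis
  proof (intro exI conjI ballI)
    show "Lip_alpha \<alpha> ff"
      unfolding Lip_alpha_def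
    proof (intro exI conjI ballI)
      show "0 \<le> suminf (eps \<alpha>)" by (rule suminf_nonneg[OF summable_eps]) (simp add: less_imp_le[OF eps_pos])
      fix x y assume "x \<in> SU2" "y \<in> SU2"
      then show "\<bar>ff x - ff y\<bar> \<le> suminf (eps \<alpha>) * su2_dist x y powr \<alpha>" by (rule ff_lip)
    qed
  next
    fix x assume "x \<in> X"
    then obtain i where x: "x = e i"
      using range_from_nat_into[OF False assms(3)] unfolding e_def by blast
    show "\<not> bdd_above ((\<lambda>N. \<bar>fourier_partial_sum \<mu> N ff x\<bar>) ` {1..})"
    proof
      assume "bdd_above ((\<lambda>N. \<bar>fourier_partial_sum \<mu> N ff x\<bar>) ` {1..})"
      then obtain B where B: "\<And>N. N \<ge> 1 \<Longrightarrow> \<bar>fourier_partial_sum \<mu> N ff x\<bar> \<le> B"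
        by (auto simp: bdd_above_def)
      define k where "k = nat \<lceil>B\<rceil>"
      define j where "j = prod_encode (i, k)"
      have ptj: "pt j = x" by (simp add: pt_def j_def x)
      have kj: "k \<le> j" unfolding j_def by (rule le_prod_encode_2)
      have "real j + 1 \<le> \<bar>fourier_partial_sum \<mu> (msq \<alpha> j + 3) ff (pt j)\<bar>"
        by (rule main_lower[OF assms(1,2,5) pt])
      also have "\<dots> \<le> B" unfolding ptj by (rule B) simp
      finally have "real j + 1 \<le> B" .
      moreover have "B \<le> real k" unfolding k_def by linarith
      moreover have "real k \<le> real j" using kj by simp
      ultimately show False by linarith
    qed
  qed
qed


end
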